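(* SetCover reduces in logarithmic space to MinCover, both for the reconfigurable semantics and for the lossy semantics.
   Context: SetCover: input a finite set $\mathcal{U}$, a collection $\mathcal{S}$ of subsets of $\mathcal{U}$ and an integer $k$; question: is there a subcollection of $\mathcal{S}$ of size at most $k$ whose union is $\mathcal{U}$? A broadcast protocol is a tuple $P=(Q,I,M,\Delta)$ where $Q$ is a finite set of states, $I\subseteq Q$ initial states, $M$ a finite message alphabet and $\Delta\subseteq Q\times\{!!m,\ ??m \mid m\in M\}\times Q$ ($!!m$ = broadcast, $??m$ = reception); unspecified receptions are implicit self-loops, so protocols are complete for receptions. A configuration is a finite undirected graph $\gamma=(V,E,L)$, $E$ symmetric irreflexive, $L:V\to Q$; initial if $L(V)\subseteq I$. A reconfigurable step from $(V,E,L)$ to $(V,E',L')$ ($E'$ arbitrary): some node $v$ and $m$ with $(L(v),!!m,L'(v))\in\Delta$, every neighbour $v'$ of $v$ in $E$ satisfies $(L(v'),??m,L'(v'))\in\Delta$, every other node keeps its label. A lossy step from $(V,E,L)$ to $(V,E,L')$ (edges fixed): some $v$, $m$ with $(L(v),!!m,L'(v))\in\Delta$ and either all other nodes keep their labels (lost broadcast) or as in the reconfigurable step with $E$ (successful broadcast). A reconfigurable (resp. lossy) execution is a sequence $\gamma_0,\dots,\gamma_r$ with $\gamma_0$ initial and consecutive reconfigurable (resp. lossy) steps; its number of nodes is $|V|$, and it covers $F$ if some node of $\gamma_r$ has a label in $F$. MinCover (for a given semantics): input a broadcast protocol $P$, a set $F\subseteq Q$ and $k\in\mathbb{N}$; question: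 does there exist a reconfigurable (resp. lossy) execution covering $F$ with exactly $k$ nodes? *)

theory Defs
  imports Complex_Main
begin

text \<open>A SetCover instance: universe U, collection S of subsets of U, bound k.\<close>
type_synonym sc_inst = "nat set \<times> nat set set \<times> nat"

definition wf_sc :: "sc_inst \<Rightarrow> bool" where
  "wf_sc x = (case x of (U, S, k) \<Rightarrow> finite U \<and> finite S \<and> (\<forall>A\<in>S. A \<subseteq> U))"

definition setcover :: "sc_inst \<Rightarrow> bool" where
  "setcover x = (case x of (U, S, k) \<Rightarrow>
     (\<exists>C. C \<subseteq> S \<and> card C \<le> k \<and> \<Union>C = U))"

datatype act = Bc nat | Rc nat   \<comment> \<open>Bc m = !!m (broadcast), Rc m = ??m (reception)\<close>

text \<open>A protocol (Q, I, M, Delta); states and messages are natural numbers.\<close>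
type_synonym proto = "nat set \<times> nat set \<times> nat set \<times> (nat \<times> act \<times> nat) set"

definition wf_proto :: "proto \<Rightarrow> bool" where
  "wf_proto P = (case P of (Q, I, M, D) \<Rightarrow>
     finite Q \<and> I \<subseteq> Q \<and> finite M \<and>
     (\<forall>q a q'. (q, a, q') \<in> D \<longrightarrow> q \<in> Q \<and> q' \<in> Q \<and>
        (\<exists>m\<in>M. a = Bc m \<or> a = Rc m)))"

definition trans :: "proto \<Rightarrow> (nat \<times> act \<times> nat) set" where
  "trans P = (case P of (Q, I, M, D) \<Rightarrow> D)"

definition init_states :: "proto \<Rightarrow> nat set" where
  "init_states P = (case P of (Q, I, M, D) \<Rightarrow> I)"

text \<open>Receptions: unspecified receptions are implicit self-loops.\<close>
definition recv :: "proto \<Rightarrow> nat \<Rightarrow> nat \<Rightarrow> nat \<Rightarrow> bool" where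
  "recv P q m q' =
     ((q, Rc m, q') \<in> trans P \<or> (q' = q \<and> (\<forall>q''. (q, Rc m, q'') \<notin> trans P)))"

text \<open>Configurations: finite undirected graph (V, E, L), E symmetric and irreflexive.\<close>
type_synonym conf = "nat set \<times> (nat \<times> nat) set \<times> (nat \<Rightarrow> nat)"

definition ugraph :: "nat set \<Rightarrow> (nat \<times> nat) set \<Rightarrow> bool" where
  "ugraph V E = (finite V \<and> E \<subseteq> V \<times> V \<and> (\<forall>u v. (u, v) \<in> E \<longrightarrow> (v, u) \<in> E) \<and>
                 (\<forall>v. (v, v) \<notin> E))"

definition initial_conf :: "proto \<Rightarrow> conf \<Rightarrow> bool" where
  "initial_conf P \<gamma> = (case \<gamma> of (V, E, L) \<Rightarrow> ugraph V E \<and> L ` V \<subseteq> init_states P)"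

definition rstep :: "proto \<Rightarrow> conf \<Rightarrow> conf \<Rightarrow> bool" where
  "rstep P \<gamma> \<gamma>' = (case \<gamma> of (V, E, L) \<Rightarrow> case \<gamma>' of (V', E', L') \<Rightarrow>
     V' = V \<and> ugraph V E' \<and>
     (\<exists>v\<in>V. \<exists>m. (L v, Bc m, L' v) \<in> trans P \<and>
        (\<forall>u\<in>V. (v, u) \<in> E \<longrightarrow> recv P (L u) m (L' u)) \<and>
        (\<forall>u\<in>V. u \<noteq> v \<and> (v, u) \<notin> E \<longrightarrow> L' u = L u)))"

definition lstep :: "proto \<Rightarrow> conf \<Rightarrow> conf \<Rightarrow> bool" where
  "lstep P \<gamma> \<gamma>' = (case \<gamma> of (V, E, L) \<Rightarrow> case \<gamma>' of (V', E', L') \<Rightarrow>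
     V' = V \<and> E' = E \<and>
     (\<exists>v\<in>V. \<exists>m. (L v, Bc m, L' v) \<in> trans P \<and>
        ((\<forall>u\<in>V. u \<noteq> v \<longrightarrow> L' u = L u) \<or>
         ((\<forall>u\<in>V. (v, u) \<in> E \<longrightarrow> recv P (L u) m (L' u)) \<and>
          (\<forall>u\<in>V. u \<noteq> v \<and> (v, u) \<notin> E \<longrightarrow> L' u = L u)))))"

definition covers :: "nat set \<Rightarrow> conf \<Rightarrow> bool" where
  "covers F \<gamma> = (case \<gamma> of (V, E, L) \<Rightarrow> \<exists>v\<in>V. L v \<in> F)"

text \<open>MinCover instance: protocol P, target set F, number of nodes k.\<close>
type_synonym mc_inst = "proto \<times> nat set \<times> nat"

definition wf_mc :: "mc_inst \<Rightarrow> bool" where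
  "wf_mc y = (case y of (P, F, k) \<Rightarrow> wf_proto P \<and> finite (trans P) \<and>
     (case P of (Q, I, M, D) \<Rightarrow> F \<subseteq> Q))"

definition mincover_with :: "(proto \<Rightarrow> conf \<Rightarrow> conf \<Rightarrow> bool) \<Rightarrow> mc_inst \<Rightarrow> bool" where
  "mincover_with step y = (case y of (P, F, k) \<Rightarrow>
     (\<exists>\<gamma>0 \<gamma>. initial_conf P \<gamma>0 \<and> (step P)\<^sup>*\<^sup>* \<gamma>0 \<gamma> \<and> covers F \<gamma> \<and> card (fst \<gamma>) = k))"

definition mincover_rec :: "mc_inst \<Rightarrow> bool" where
  "mincover_rec = mincover_with rstep"

definition mincover_lossy :: "mc_inst \<Rightarrow> bool" where
  "mincover_lossy = mincover_with lstep"

datatype tok = T0 | T1 | TL | TR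

fun bin :: "nat \<Rightarrow> tok list" where
  "bin 0 = []"
| "bin (Suc n) = (if even (Suc n) then T0 else T1) # bin (Suc n div 2)"

definition enc_list :: "tok list list \<Rightarrow> tok list" where
  "enc_list ws = TL # concat (map (\<lambda>w. TL # w @ [TR]) ws) @ [TR]"

definition natenc :: "nat \<Rightarrow> tok list \<Rightarrow> bool" where
  "natenc n w = (w = bin n)"

definition encodes_set :: "('a \<Rightarrow> tok list \<Rightarrow> bool) \<Rightarrow> 'a set \<Rightarrow> tok list \<Rightarrow> bool" where
  "encodes_set R A w = (\<exists>xs ws. distinct xs \<and> set xs = A \<and> list_all2 R xs ws \<and> w = enc_list ws)"

fun enc_act :: "act \<Rightarrow> tok list" where
  "enc_act (Bc m) = enc_list [bin 0, bin m]"
| "enc_act (Rc m) = enc_list [bin 1, bin m]"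

definition transenc :: "nat \<times> act \<times> nat \<Rightarrow> tok list \<Rightarrow> bool" where
  "transenc t w = (case t of (q, a, q') \<Rightarrow> w = enc_list [bin q, enc_act a, bin q'])"

definition encodes_sc :: "sc_inst \<Rightarrow> tok list \<Rightarrow> bool" where
  "encodes_sc x w = (case x of (U, S, k) \<Rightarrow>
     \<exists>wU wS. encodes_set natenc U wU \<and> encodes_set (encodes_set natenc) S wS \<and>
       w = enc_list [wU, wS, bin k])"

definition encodes_mc :: "mc_inst \<Rightarrow> tok list \<Rightarrow> bool" where
  "encodes_mc y w = (case y of ((Q, I, M, D), F, k) \<Rightarrow>
     \<exists>wQ wI wM wD wF. encodes_set natenc Q wQ \<and> encodes_set natenc I wI \<and>
       encodes_set natenc M wM \<and> encodes_set transenc D wD \<and> encodes_set natenc F wF \<and>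
       w = enc_list [wQ, wI, wM, wD, wF, bin k])"

text \<open>Deterministic Turing transducer: read-only input tape with endmarkers (cells 0 and
  n+1 read None), one binary work tape (None = blank), write-only output tape.\<close>

datatype dir = Lt | St | Rt

record tm =
  nst :: nat
  q0 :: nat
  qf :: nat
  dl :: "nat \<Rightarrow> tok option \<Rightarrow> bool option \<Rightarrow> nat \<times> dir \<times> bool option \<times> dir \<times> tok option"

type_synonym tmconf = "nat \<times> nat \<times> (nat \<Rightarrow> bool option) \<times> nat \<times> tok list"

definition wf_tm :: "tm \<Rightarrow> bool" where
  "wf_tm M = (q0 M < nst M \<and> qf M < nst M \<and>
     (\<forall>q < nst M. \<forall>a b. fst (dl M q a b) < nst M))"

fun mv :: "dir \<Rightarrow> nat \<Rightarrow> nat" where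
  "mv Lt p = p - 1"
| "mv St p = p"
| "mv Rt p = p + 1"

definition read_in :: "tok list \<Rightarrow> nat \<Rightarrow> tok option" where
  "read_in w i = (if 1 \<le> i \<and> i \<le> length w then Some (w ! (i - 1)) else None)"

definition tm_step :: "tm \<Rightarrow> tok list \<Rightarrow> tmconf \<Rightarrow> tmconf" where
  "tm_step M w c = (case c of (q, i, t, h, out) \<Rightarrow>
     if q = qf M then c else
     (case dl M q (read_in w i) (t h) of (q', di, s, dw, ob) \<Rightarrow>
        (q', min (length w + 1) (mv di i), t(h := s), mv dw h,
         out @ (case ob of None \<Rightarrow> [] | Some a \<Rightarrow> [a]))))"

definition tm_run :: "tm \<Rightarrow> tok list \<Rightarrow> nat \<Rightarrow> tmconf" where
  "tm_run M w n = (tm_step M w ^^ n) (q0 M, 0, \<lambda>_. None, 0, [])"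

definition cstate :: "tmconf \<Rightarrow> nat" where "cstate c = (case c of (q, i, t, h, out) \<Rightarrow> q)"
definition cwhead :: "tmconf \<Rightarrow> nat" where "cwhead c = (case c of (q, i, t, h, out) \<Rightarrow> h)"
definition coutput :: "tmconf \<Rightarrow> tok list" where "coutput c = (case c of (q, i, t, h, out) \<Rightarrow> out)"

definition logspace_computes :: "tm \<Rightarrow> (tok list \<Rightarrow> tok list) \<Rightarrow> bool" where
  "logspace_computes M f = (wf_tm M \<and> (\<exists>c::real. \<forall>w.
     (\<exists>n. cstate (tm_run M w n) = qf M \<and> coutput (tm_run M w n) = f w) \<and>
     (\<forall>n. real (cwhead (tm_run M w n)) \<le> c * log 2 (real (length w) + 2))))"

definition logspace_reduces_sc_to :: "(mc_inst \<Rightarrow> bool) \<Rightarrow> bool" where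
  "logspace_reduces_sc_to Prob = (\<exists>M f. logspace_computes M f \<and>
     (\<forall>x w. wf_sc x \<and> encodes_sc x w \<longrightarrow>
        (\<exists>y. wf_mc y \<and> encodes_mc y (f w) \<and> (setcover x \<longleftrightarrow> Prob y))))"

end

theory Submission
  imports Defs "HOL-Library.Countable_Set"
begin


fun incl :: "tok list \<Rightarrow> tok list" where
  "incl [] = [T1]"
| "incl (T1 # r) = T0 # incl r"
| "incl (t # r) = T1 # r"

lemma bin_bits: "set (bin n) \<subseteq> {T0, T1}"
  by (induction n rule: bin.induct) auto

lemma bin_Suc_incl: "bin (Suc n) = incl (bin n)"
proof (induction n rule: less_induct)
  case (less n)
  show ?case
  proof (cases n)
    case 0 then show ?thesis by simp
  next
    case (Suc m)
    show ?thesis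
    proof (cases "even (Suc m)")
      case True
      then have "Suc (Suc m) div 2 = Suc m div 2" by presburger
      then show ?thesis using Suc True by simp
    next
      case False
      then have e: "Suc (Suc m) div 2 = Suc (Suc m div 2)" by presburger
      have "Suc m div 2 < n" using Suc by simp
      then have "bin (Suc (Suc m div 2)) = incl (bin (Suc m div 2))" using less by blast
      then show ?thesis using Suc False e by simp
    qed
  qed
qed

datatype op = Emit tok | EmitC | Inc | Rst

fun exec_op :: "op \<Rightarrow> nat \<times> tok list \<Rightarrow> nat \<times> tok list" where
  "exec_op (Emit t) (c, out) = (c, out @ [t])"
| "exec_op EmitC (c, out) = (c, out @ bin c)"
| "exec_op Inc (c, out) = (Suc c, out)"
| "exec_op Rst (c, out) = (0, out)"

definition exec_ops :: "op list \<Rightarrow> nat \<times> tok list \<Rightarrow> nat \<times> tok list" where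
  "exec_ops ops s = fold exec_op ops s"

lemma exec_ops_simps[simp]:
  "exec_ops [] s = s"
  "exec_ops (Emit t # r) (c, out) = exec_ops r (c, out @ [t])"
  "exec_ops (EmitC # r) (c, out) = exec_ops r (c, out @ bin c)"
  "exec_ops (Inc # r) (c, out) = exec_ops r (Suc c, out)"
  "exec_ops (Rst # r) (c, out) = exec_ops r (0, out)"
  by (simp_all add: exec_ops_def)

type_synonym sg = "nat \<times> nat \<times> nat"

definition isbit :: "tok \<Rightarrow> bool" where "isbit t = (t = T0 \<or> t = T1)"

definition dlt :: "nat \<Rightarrow> sg \<Rightarrow> tok \<Rightarrow> sg" where
  "dlt p \<sigma> t = (case \<sigma> of (s, d, c) \<Rightarrow> (case t of
      TL \<Rightarrow> (if d = 1 then min 3 (Suc s) else s, min 7 (Suc d), c)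
    | TR \<Rightarrow> (s, d - 1, c)
    | T0 \<Rightarrow> (if p = 5 \<and> s = 3 \<and> d = 2 then (s, d, 0) else (s, d, c))
    | T1 \<Rightarrow> (s, d, c)))"

definition tops :: "nat \<Rightarrow> sg \<Rightarrow> tok \<Rightarrow> op list" where
  "tops p \<sigma> t = (case \<sigma> of (s, d, c) \<Rightarrow>
   if p = 0 then (if t = TL \<and> (s = 1 \<or> s = 2) \<and> d = 3 then [Inc, Emit TL, EmitC, Emit TR] else [])
   else if p = 1 then (if t = TL \<and> s = 1 \<and> d = 3 then [Inc]
      else if t = TL \<and> s = 2 \<and> d = 3 then [Inc, Emit TL, EmitC, Emit TR] else [])
   else if p = 2 then (if s = 1 \<and> ((t = TL \<and> d \<ge> 2) \<or> (t \<noteq> TL \<and> d \<ge> 3)) then [Emit t] else [])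
   else if p = 3 then
     (if s = 1 \<and> t = TL \<and> d = 3 then [Emit TL, Emit TL, Emit TL, EmitC, Emit TR, Emit TL, Emit TL, Emit TL, Emit T1, Emit TR, Emit TL]
      else if s = 1 \<and> isbit t \<and> d = 4 then [Emit t]
      else if s = 1 \<and> t = TR \<and> d = 4 then [Emit TR, Emit TR, Emit TR, Inc, Emit TL, EmitC, Emit TR, Emit TR, Emit TR]
      else if s = 2 \<and> t = TL \<and> d = 3 then [Inc]
      else if s = 2 \<and> t = TL \<and> d = 5 then [Emit TL, Emit TL, Emit TL, EmitC, Emit TR, Emit TL, Emit TL, Emit TL, Emit TR, Emit TL]
      else if s = 2 \<and> isbit t \<and> d = 6 then [Emit t]
      else if s = 2 \<and> t = TR \<and> d = 6 then [Emit TR, Emit TR, Emit TR, Emit TL, EmitC, Emit TR, Emit TR, Emit TR]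
      else [])
   else if p = 4 then (if t = TL \<and> s = 1 \<and> d = 3 then [Inc] else [])
   else (if s = 3 \<and> d = 2 \<and> isbit t then (if c = 1 then (if t = T1 then [Emit T0] else [Emit T1]) else [Emit t])
         else []))"

definition startops :: "nat \<Rightarrow> op list" where
  "startops p = (if p = 0 then [Emit TL, Emit TL, Emit TL, Rst, Inc, Emit TL, EmitC, Emit TR]
    else if p = 1 then [Emit TL, Emit TL, Rst, Inc, Emit TL, EmitC, Emit TR]
    else if p = 2 then [Emit TL]
    else if p = 3 then [Emit TL, Emit TL, Rst, Inc]
    else if p = 4 then [Emit TL, Emit TL, Rst, Inc]
    else [Emit TL])"

definition endops :: "nat \<Rightarrow> sg \<Rightarrow> op list" where
  "endops p \<sigma> = (if p = 0 then [Emit TR, Emit TR]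
    else if p = 1 then [Emit TR, Emit TR]
    else if p = 2 then [Emit TR]
    else if p = 3 then [Emit TR, Emit TR]
    else if p = 4 then [Emit TL, EmitC, Emit TR, Emit TR, Emit TR]
    else (if snd (snd \<sigma>) = 1 then [Emit T1] else []) @ [Emit TR, Emit TR])"

definition sg0 :: sg where "sg0 = (0, 0, 1)"

definition absstep :: "nat \<Rightarrow> tok \<Rightarrow> sg \<times> nat \<times> tok list \<Rightarrow> sg \<times> nat \<times> tok list" where
  "absstep p t st = (case st of (\<sigma>, co) \<Rightarrow> (dlt p \<sigma> t, exec_ops (tops p \<sigma> t) co))"

definition abspass :: "tok list \<Rightarrow> nat \<Rightarrow> nat \<times> tok list \<Rightarrow> nat \<times> tok list" where
  "abspass w p co = (case fold (absstep p) w (sg0, exec_ops (startops p) co) of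
     (\<sigma>, co') \<Rightarrow> exec_ops (endops p \<sigma>) co')"

definition fout :: "tok list \<Rightarrow> tok list" where
  "fout w = snd (fold (abspass w) [0..<6] (0, []))"


definition elt :: "nat \<Rightarrow> tok list" where "elt u = TL # bin u @ [TR]"
definition ulist :: "nat list \<Rightarrow> tok list" where "ulist us = concat (map elt us)"
definition sitem :: "nat list \<Rightarrow> tok list" where "sitem A = TL # (TL # ulist A @ [TR]) @ [TR]"
definition slist :: "nat list list \<Rightarrow> tok list" where "slist As = concat (map sitem As)"
definition tw :: "nat \<times> act \<times> nat \<Rightarrow> tok list" where
  "tw t = (case t of (q, a, q') \<Rightarrow> TL # enc_list [bin q, enc_act a, bin q'] @ [TR])"
definition qel :: "nat \<Rightarrow> tok list" where "qel i = TL # bin i @ [TR]"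
definition cl :: "nat \<Rightarrow> nat \<Rightarrow> tok list" where "cl c n = concat (map qel [c..<c+n])"

fun dcoll :: "nat \<Rightarrow> nat list \<Rightarrow> (nat \<times> act \<times> nat) list" where
  "dcoll c [] = []"
| "dcoll c (u # r) = (c, Rc u, Suc c) # dcoll (Suc c) r"

fun dsetl :: "nat \<Rightarrow> nat list list \<Rightarrow> (nat \<times> act \<times> nat) list" where
  "dsetl c [] = []"
| "dsetl c (A # r) = map (\<lambda>a. (Suc c, Bc a, Suc c)) A @ dsetl (Suc c) r"

lemma cl_0[simp]: "cl c 0 = []" by (simp add: cl_def)
lemma cl_Suc: "cl c (Suc n) = qel c @ cl (Suc c) n"
proof -
  have "[c..<c + Suc n] = c # [Suc c..<Suc c + n]" by (subst upt_conv_Cons) auto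
  then show ?thesis unfolding cl_def by simp
qed

lemma absstep_simp[simp]: "absstep p t (\<sigma>, co) = (dlt p \<sigma> t, exec_ops (tops p \<sigma> t) co)"
  by (simp add: absstep_def)

lemma fold_bits_copy:
  assumes "set bs \<subseteq> {T0, T1}" "dlt p \<sigma> T0 = \<sigma>" "dlt p \<sigma> T1 = \<sigma>"
    "tops p \<sigma> T0 = [Emit T0]" "tops p \<sigma> T1 = [Emit T1]"
  shows "fold (absstep p) bs (\<sigma>, c, out) = (\<sigma>, c, out @ bs)"
  using assms(1)
proof (induction bs arbitrary: out)
  case Nil then show ?case by simp
next
  case (Cons t r)
  then have "t = T0 \<or> t = T1" by auto
  then show ?case using Cons assms by auto
qed

lemma fold_bits_id:
  assumes "set bs \<subseteq> {T0, T1}" "dlt p \<sigma> T0 = \<sigma>" "dlt p \<sigma> T1 = \<sigma>"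
    "tops p \<sigma> T0 = []" "tops p \<sigma> T1 = []"
  shows "fold (absstep p) bs (\<sigma>, co) = (\<sigma>, co)"
  using assms(1)
proof (induction bs)
  case Nil then show ?case by simp
next
  case (Cons t r)
  then have "t = T0 \<or> t = T1" by auto
  then show ?case using Cons assms by auto
qed

lemma fold_bin_copy[simp]:
  "dlt p \<sigma> T0 = \<sigma> \<Longrightarrow> dlt p \<sigma> T1 = \<sigma> \<Longrightarrow> tops p \<sigma> T0 = [Emit T0] \<Longrightarrow> tops p \<sigma> T1 = [Emit T1] \<Longrightarrow>
   fold (absstep p) (bin u) (\<sigma>, c, out) = (\<sigma>, c, out @ bin u)"
  by (rule fold_bits_copy[OF bin_bits])

lemma fold_bin_id[simp]:
  "dlt p \<sigma> T0 = \<sigma> \<Longrightarrow> dlt p \<sigma> T1 = \<sigma> \<Longrightarrow> tops p \<sigma> T0 = [] \<Longrightarrow> tops p \<sigma> T1 = [] \<Longrightarrow>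
   fold (absstep p) (bin u) (\<sigma>, co) = (\<sigma>, co)"
  by (rule fold_bits_id[OF bin_bits])

lemma Suc2: "Suc (Suc 0) = 2" by simp

lemmas ev = dlt_def tops_def isbit_def Suc2

lemma elt_U:
  "fold (absstep 0) (elt u) ((Suc 0,3,Suc 0), c, out) = ((Suc 0,3,Suc 0), Suc c, out @ qel (Suc c))"
  "fold (absstep (Suc 0)) (elt u) ((Suc 0,3,Suc 0), c, out) = ((Suc 0,3,Suc 0), Suc c, out)"
  "fold (absstep 2) (elt u) ((Suc 0,3,Suc 0), c, out) = ((Suc 0,3,Suc 0), c, out @ elt u)"
  "fold (absstep 3) (elt u) ((Suc 0,3,Suc 0), c, out) = ((Suc 0,3,Suc 0), Suc c, out @ tw (c, Rc u, Suc c))"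
  "fold (absstep 4) (elt u) ((Suc 0,3,Suc 0), c, out) = ((Suc 0,3,Suc 0), Suc c, out)"
  "fold (absstep 5) (elt u) ((Suc 0,3,Suc 0), c, out) = ((Suc 0,3,Suc 0), c, out)"
  by (simp_all add: elt_def ev qel_def tw_def enc_list_def)


lemma elt_E:
  "p \<noteq> 3 \<Longrightarrow> p < 6 \<Longrightarrow> fold (absstep p) (elt u) ((2,5,Suc 0), co) = ((2,5,Suc 0), co)"
  "fold (absstep 3) (elt u) ((2,5,Suc 0), c, out) = ((2,5,Suc 0), c, out @ tw (c, Bc u, c))"
proof -
  show "fold (absstep 3) (elt u) ((2,5,Suc 0), c, out) = ((2,5,Suc 0), c, out @ tw (c, Bc u, c))"
    by (simp add: elt_def ev qel_def tw_def enc_list_def)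
  assume "p \<noteq> 3" "p < 6"
  then have "p = 0 \<or> p = Suc 0 \<or> p = 2 \<or> p = 4 \<or> p = 5" by arith
  then show "fold (absstep p) (elt u) ((2,5,Suc 0), co) = ((2,5,Suc 0), co)"
    by (elim disjE) (simp_all add: elt_def ev)
qed

lemma ulist_Cons[simp]: "ulist (u # r) = elt u @ ulist r" by (simp add: ulist_def)
lemma ulist_Nil[simp]: "ulist [] = []" by (simp add: ulist_def)
lemma slist_Cons[simp]: "slist (A # r) = sitem A @ slist r" by (simp add: slist_def)
lemma slist_Nil[simp]: "slist [] = []" by (simp add: slist_def)

lemma ulist_E:
  "p \<noteq> 3 \<Longrightarrow> p < 6 \<Longrightarrow> fold (absstep p) (ulist A) ((2,5,Suc 0), co) = ((2,5,Suc 0), co)"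
  "fold (absstep 3) (ulist A) ((2,5,Suc 0), c, out) = ((2,5,Suc 0), c, out @ concat (map (\<lambda>a. tw (c, Bc a, c)) A))"
  by (induction A arbitrary: out) (simp_all add: elt_E)

lemma sitem_S:
  "fold (absstep 0) (sitem A) ((2,3,Suc 0), c, out) = ((2,3,Suc 0), Suc c, out @ qel (Suc c))"
  "fold (absstep (Suc 0)) (sitem A) ((2,3,Suc 0), c, out) = ((2,3,Suc 0), Suc c, out @ qel (Suc c))"
  "fold (absstep 2) (sitem A) ((2,3,Suc 0), co) = ((2,3,Suc 0), co)"
  "fold (absstep 3) (sitem A) ((2,3,Suc 0), c, out) = ((2,3,Suc 0), Suc c, out @ concat (map tw (map (\<lambda>a. (Suc c, Bc a, Suc c)) A)))"
  "fold (absstep 4) (sitem A) ((2,3,Suc 0), co) = ((2,3,Suc 0), co)"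
  "fold (absstep 5) (sitem A) ((2,3,Suc 0), co) = ((2,3,Suc 0), co)"
  by (simp_all add: sitem_def ev qel_def ulist_E o_def)

lemma ulist_U:
  "fold (absstep 0) (ulist us) ((Suc 0,3,Suc 0), c, out) = ((Suc 0,3,Suc 0), c + length us, out @ cl (Suc c) (length us))"
  "fold (absstep (Suc 0)) (ulist us) ((Suc 0,3,Suc 0), c, out) = ((Suc 0,3,Suc 0), c + length us, out)"
  "fold (absstep 2) (ulist us) ((Suc 0,3,Suc 0), c, out) = ((Suc 0,3,Suc 0), c, out @ ulist us)"
  "fold (absstep 3) (ulist us) ((Suc 0,3,Suc 0), c, out) = ((Suc 0,3,Suc 0), c + length us, out @ concat (map tw (dcoll c us)))"
  "fold (absstep 4) (ulist us) ((Suc 0,3,Suc 0), c, out) = ((Suc 0,3,Suc 0), c + length us, out)"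
  "fold (absstep 5) (ulist us) ((Suc 0,3,Suc 0), c, out) = ((Suc 0,3,Suc 0), c, out)"
  by (induction us arbitrary: c out) (simp_all add: elt_U cl_Suc)

lemma slist_S:
  "fold (absstep 0) (slist As) ((2,3,Suc 0), c, out) = ((2,3,Suc 0), c + length As, out @ cl (Suc c) (length As))"
  "fold (absstep (Suc 0)) (slist As) ((2,3,Suc 0), c, out) = ((2,3,Suc 0), c + length As, out @ cl (Suc c) (length As))"
  "fold (absstep 2) (slist As) ((2,3,Suc 0), co) = ((2,3,Suc 0), co)"
  "fold (absstep 3) (slist As) ((2,3,Suc 0), c, out) = ((2,3,Suc 0), c + length As, out @ concat (map tw (dsetl c As)))"
  "fold (absstep 4) (slist As) ((2,3,Suc 0), co) = ((2,3,Suc 0), co)"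
  "fold (absstep 5) (slist As) ((2,3,Suc 0), co) = ((2,3,Suc 0), co)"
  by (induction As arbitrary: c out) (simp_all add: sitem_S cl_Suc)

lemma carry0:
  "set bs \<subseteq> {T0, T1} \<Longrightarrow> fold (absstep 5) bs ((3,2,0), c, out) = ((3,2,0), c, out @ bs)"
  by (rule fold_bits_copy) (simp_all add: ev)

lemma carry:
  assumes "set bs \<subseteq> {T0, T1}"
  shows "\<exists>cr X. fold (absstep 5) bs ((3,2,Suc 0), c, out) = ((3,2,cr), c, out @ X) \<and>
     X @ (if cr = 1 then [T1] else []) = incl bs"
  using assms
proof (induction bs arbitrary: out)
  case Nil then show ?case by simp
next
  case (Cons t r)
  then have t: "t = T0 \<or> t = T1" and r: "set r \<subseteq> {T0, T1}" by auto
  show ?case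
  proof (cases "t = T1")
    case True
    obtain cr X where "fold (absstep 5) r ((3,2,Suc 0), c, out @ [T0]) = ((3,2,cr), c, out @ [T0] @ X)"
      "X @ (if cr = 1 then [T1] else []) = incl r" using Cons.IH[OF r, of "out @ [T0]"] by auto
    then show ?thesis using True by (intro exI[of _ cr] exI[of _ "T0 # X"]) (simp add: ev)
  next
    case False
    then have "t = T0" using t by simp
    then show ?thesis using carry0[OF r, of c "out @ [T1]"]
      by (intro exI[of _ 0] exI[of _ "T1 # r"]) (simp add: ev)
  qed
qed

definition wenc :: "nat list \<Rightarrow> nat list list \<Rightarrow> nat \<Rightarrow> tok list" where
  "wenc us As k = [TL, TL, TL] @ ulist us @ [TR, TR, TL, TL] @ slist As @ [TR, TR, TL] @ bin k @ [TR, TR]"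

lemma wenc_eq: "wenc us As k = enc_list [enc_list (map bin us), enc_list (map (\<lambda>A. enc_list (map bin A)) As), bin k]"
  by (simp add: wenc_def enc_list_def ulist_def slist_def sitem_def[abs_def] elt_def[abs_def] o_def)


lemma bin1: "bin (Suc 0) = [T1]" by simp

lemma pass0a: "fold (absstep 0) [TL,TL,TL] (sg0, c, out) = ((Suc 0, 3, Suc 0), c, out)"
  by (simp add: sg0_def ev)
lemma pass0b: "fold (absstep 0) [TR, TR, TL, TL] ((Suc 0, 3, Suc 0), c, out) = ((2, 3, Suc 0), c, out)"
  by (simp add: ev)
lemma pass0c: "fold (absstep 0) [TR, TR, TL] ((2, 3, Suc 0), c, out) = ((3, 2, Suc 0), c, out)"
  by (simp add: ev)
lemma pass0d: "fold (absstep 0) (bin k @ [TR, TR]) ((3, 2, Suc 0), c, out) = ((3, 0, Suc 0), c, out)"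
  by (simp add: ev)

lemmas pev = abspass_def wenc_def startops_def endops_def sg0_def ev ulist_U slist_S

lemma pass0: "abspass (wenc us As k) 0 (c, out) = (length us + length As + 1,
    out @ [TL,TL,TL] @ qel 1 @ cl 2 (length us) @ cl (length us + 2) (length As) @ [TR,TR])"
  by (simp add: pev qel_def)

lemma pass1: "abspass (wenc us As k) (Suc 0) (c, out) = (length us + length As + 1,
    out @ [TL,TL] @ qel 1 @ cl (length us + 2) (length As) @ [TR,TR])"
  by (simp add: pev qel_def)

lemma pass2: "abspass (wenc us As k) 2 (c, out) = (c, out @ [TL, TL] @ ulist us @ [TR, TR])"
  by (simp add: pev)

lemma pass3: "abspass (wenc us As k) 3 (c, out) = (length us + length As + 1,
    out @ [TL,TL] @ concat (map tw (dcoll 1 us)) @ concat (map tw (dsetl (length us + 1) As)) @ [TR,TR])"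
  by (simp add: pev)

lemma pass4: "abspass (wenc us As k) 4 (c, out) = (length us + 1, out @ [TL,TL] @ qel (length us + 1) @ [TR,TR])"
  by (simp add: pev qel_def)


lemma pass5: "abspass (wenc us As k) 5 (c, out) = (c, out @ [TL] @ bin (Suc k) @ [TR,TR])"
proof -
  have pre: "fold (absstep 5) ([TL, TL, TL] @ ulist us @ [TR, TR, TL, TL] @ slist As @ [TR, TR, TL])
      (sg0, exec_ops (startops 5) (c, out)) = ((3,2,Suc 0), c, out @ [TL])"
    by (simp add: pev)
  have w: "wenc us As k = ([TL, TL, TL] @ ulist us @ [TR, TR, TL, TL] @ slist As @ [TR, TR, TL]) @ bin k @ [TR, TR]"
    by (simp add: wenc_def)
  obtain cr X where h: "fold (absstep 5) (bin k) ((3,2,Suc 0), c, out @ [TL]) = ((3,2,cr), c, out @ [TL] @ X)"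
     "X @ (if cr = 1 then [T1] else []) = incl (bin k)"
    using carry[OF bin_bits, of k c "out @ [TL]"] by auto
  have f: "fold (absstep 5) (wenc us As k) (sg0, exec_ops (startops 5) (c, out)) = ((3,0,cr), c, out @ [TL] @ X)"
  proof -
    have "fold (absstep 5) (wenc us As k) (sg0, exec_ops (startops 5) (c, out)) =
      fold (absstep 5) [TR, TR] (fold (absstep 5) (bin k) (fold (absstep 5)
        ([TL, TL, TL] @ ulist us @ [TR, TR, TL, TL] @ slist As @ [TR, TR, TL]) (sg0, exec_ops (startops 5) (c, out))))"
      unfolding w by (simp only: fold_append o_apply)
    also have "\<dots> = ((3,0,cr), c, out @ [TL] @ X)" unfolding pre h(1) by (simp add: ev)
    finally show ?thesis .
  qed
  show ?thesis
    unfolding abspass_def f using h(2) bin_Suc_incl[of k]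
    by (cases "cr = 1") (simp_all add: endops_def)
qed

lemma fout_wenc: "fout (wenc us As k) =
   [TL,TL,TL] @ qel 1 @ cl 2 (length us) @ cl (length us + 2) (length As) @ [TR,TR]
   @ [TL,TL] @ qel 1 @ cl (length us + 2) (length As) @ [TR,TR]
   @ [TL, TL] @ ulist us @ [TR, TR]
   @ [TL,TL] @ concat (map tw (dcoll 1 us)) @ concat (map tw (dsetl (length us + 1) As)) @ [TR,TR]
   @ [TL,TL] @ qel (length us + 1) @ [TR,TR]
   @ [TL] @ bin (Suc k) @ [TR,TR]"
proof -
  have u: "[0..<6] = [0, Suc 0, 2, 3, 4, (5::nat)]" by (simp add: numeral_eq_Suc upt_Suc)
  show ?thesis unfolding fout_def u fold_Cons fold_Nil o_apply id_apply
    by (simp add: pass0 pass1 pass2 pass3 pass4 pass5)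
qed


definition protoD :: "nat list \<Rightarrow> nat list list \<Rightarrow> (nat \<times> act \<times> nat) set" where
  "protoD us As = {(Suc i, Rc (us!i), Suc (Suc i)) | i. i < length us} \<union>
     {(length us + 1 + j, Bc a, length us + 1 + j) | j a. 1 \<le> j \<and> j \<le> length As \<and> a \<in> set (As!(j-1))}"

definition mkproto :: "nat list \<Rightarrow> nat list list \<Rightarrow> proto" where
  "mkproto us As = ({1..length us + length As + 1}, insert 1 {length us + 2..length us + length As + 1},
     set us, protoD us As)"

definition mky :: "nat list \<Rightarrow> nat list list \<Rightarrow> nat \<Rightarrow> mc_inst" where
  "mky us As k = (mkproto us As, {length us + 1}, Suc k)"

lemma trans_mk[simp]: "trans (mkproto us As) = protoD us As"
  by (simp add: trans_def mkproto_def)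
lemma init_mk[simp]: "init_states (mkproto us As) = insert 1 {length us + 2..length us + length As + 1}"
  by (simp add: init_states_def mkproto_def)

lemma finite_protoD: "finite (protoD us As)"
proof -
  have e1: "{(Suc i, Rc (us!i), Suc (Suc i)) | i. i < length us} = (\<lambda>i. (Suc i, Rc (us!i), Suc (Suc i))) ` {..<length us}"
    by auto
  have e2: "{(length us + 1 + j, Bc a, length us + 1 + j) | j a. 1 \<le> j \<and> j \<le> length As \<and> a \<in> set (As!(j-1))}
     = (\<Union>j\<in>{1..length As}. (\<lambda>a. (length us + 1 + j, Bc a, length us + 1 + j)) ` set (As!(j-1)))"
    by auto
  show ?thesis unfolding protoD_def e1 e2
    by (intro finite_UnI finite_imageI finite_UN_I) auto
qed

lemma protoD_mem:
  assumes "\<forall>A\<in>set As. set A \<subseteq> set us" and "(q, a, q') \<in> protoD us As"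
  shows "q \<in> {1..length us + length As + 1} \<and> q' \<in> {1..length us + length As + 1} \<and>
    (\<exists>m\<in>set us. a = Bc m \<or> a = Rc m)"
  using assms(2) unfolding protoD_def
proof (elim UnE CollectE exE conjE)
  fix i assume "(q, a, q') = (Suc i, Rc (us ! i), Suc (Suc i))" "i < length us"
  then show ?thesis by auto
next
  fix j m assume h: "(q, a, q') = (length us + 1 + j, Bc m, length us + 1 + j)" "1 \<le> j" "j \<le> length As"
    "m \<in> set (As ! (j - 1))"
  have "As!(j-1) \<in> set As" using h by (intro nth_mem) auto
  then have "m \<in> set us" using assms(1) h by blast
  then show ?thesis using h by auto
qed

lemma wf_mky:
  assumes "\<forall>A\<in>set As. set A \<subseteq> set us"
  shows "wf_mc (mky us As k)"
  unfolding wf_mc_def mky_def mkproto_def wf_proto_def prod.case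
  using finite_protoD[of us As] protoD_mem[OF assms]
  by (simp add: trans_def)


lemma protoD_cases:
  assumes "(q, a, q') \<in> protoD us As"
  obtains (rc) i where "q = Suc i" "a = Rc (us!i)" "q' = Suc (Suc i)" "i < length us"
  | (bc) j m where "q = length us + 1 + j" "a = Bc m" "q' = q" "1 \<le> j" "j \<le> length As" "m \<in> set (As!(j-1))"
  using assms unfolding protoD_def by blast

definition gstep :: "proto \<Rightarrow> conf \<Rightarrow> conf \<Rightarrow> bool" where
  "gstep P \<gamma> \<gamma>' = (case \<gamma> of (V, E, L) \<Rightarrow> case \<gamma>' of (V', E', L') \<Rightarrow>
     V' = V \<and> (\<exists>v\<in>V. \<exists>m. (L v, Bc m, L' v) \<in> trans P \<and>
        (\<forall>u\<in>V. u \<noteq> v \<longrightarrow> L' u = L u \<or> recv P (L u) m (L' u))))"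

lemma rstep_gstep: "rstep P \<gamma> \<gamma>' \<Longrightarrow> gstep P \<gamma> \<gamma>'"
  unfolding rstep_def gstep_def by (auto split: prod.splits)

lemma lstep_gstep: "lstep P \<gamma> \<gamma>' \<Longrightarrow> gstep P \<gamma> \<gamma>'"
  unfolding lstep_def gstep_def by (auto split: prod.splits)

definition Inv :: "nat list \<Rightarrow> nat list list \<Rightarrow> nat set \<Rightarrow> (nat \<Rightarrow> nat) \<Rightarrow> (nat \<Rightarrow> nat) \<Rightarrow> bool" where
  "Inv us As V L0 L = (\<forall>x\<in>V.
     (L0 x \<in> {length us + 2..length us + length As + 1} \<and> L x = L0 x) \<or>
     (L0 x \<notin> {length us + 2..length us + length As + 1} \<and> 1 \<le> L x \<and> L x \<le> length us + 1 \<and>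
        (\<forall>i < L x - 1. \<exists>w\<in>V. L0 w \<in> {length us + 2..length us + length As + 1} \<and>
            us!i \<in> set (As!(L0 w - length us - 2)))))"

lemma Inv_init:
  assumes "L0 ` V \<subseteq> insert 1 {length us + 2..length us + length As + 1}"
  shows "Inv us As V L0 L0"
  unfolding Inv_def
proof
  fix x assume "x \<in> V"
  then have "L0 x = 1 \<or> L0 x \<in> {length us + 2..length us + length As + 1}" using assms by auto
  then show "(L0 x \<in> {length us + 2..length us + length As + 1} \<and> L0 x = L0 x) \<or>
     (L0 x \<notin> {length us + 2..length us + length As + 1} \<and> 1 \<le> L0 x \<and> L0 x \<le> length us + 1 \<and>
        (\<forall>i < L0 x - 1. \<exists>w\<in>V. L0 w \<in> {length us + 2..length us + length As + 1} \<and>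
            us!i \<in> set (As!(L0 w - length us - 2))))"
    by auto
qed

lemma Inv_step:
  assumes inv: "Inv us As V L0 L" and st: "gstep (mkproto us As) (V, E, L) (V', E', L')"
  shows "Inv us As V L0 L' \<and> V' = V"
proof -
  let ?SS = "{length us + 2..length us + length As + 1}"
  from st obtain v m where V': "V' = V" and vV: "v \<in> V" and tv: "(L v, Bc m, L' v) \<in> protoD us As"
    and oth: "\<forall>u\<in>V. u \<noteq> v \<longrightarrow> L' u = L u \<or> recv (mkproto us As) (L u) m (L' u)"
    unfolding gstep_def by auto
  from tv obtain j where j: "L v = length us + 1 + j" "L' v = L v" "1 \<le> j" "j \<le> length As"
    "m \<in> set (As!(j-1))"
    by (cases rule: protoD_cases) auto
  have v0: "L0 v \<in> ?SS" "L0 v = L v"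
    using inv vV j unfolding Inv_def by force+
  have mv: "m \<in> set (As!(L0 v - length us - 2))" using j v0 by simp
  have "Inv us As V L0 L'"
    unfolding Inv_def
  proof
    fix x assume xV: "x \<in> V"
    have ix: "(L0 x \<in> ?SS \<and> L x = L0 x) \<or>
     (L0 x \<notin> ?SS \<and> 1 \<le> L x \<and> L x \<le> length us + 1 \<and>
        (\<forall>i < L x - 1. \<exists>w\<in>V. L0 w \<in> ?SS \<and> us!i \<in> set (As!(L0 w - length us - 2))))"
      using inv xV unfolding Inv_def by blast
    show "(L0 x \<in> ?SS \<and> L' x = L0 x) \<or>
     (L0 x \<notin> ?SS \<and> 1 \<le> L' x \<and> L' x \<le> length us + 1 \<and>
        (\<forall>i < L' x - 1. \<exists>w\<in>V. L0 w \<in> ?SS \<and> us!i \<in> set (As!(L0 w - length us - 2))))"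
    proof (cases "L' x = L x")
      case True then show ?thesis using ix by simp
    next
      case False
      then have "x \<noteq> v" using j by auto
      then have "recv (mkproto us As) (L x) m (L' x)" using oth xV False by auto
      then have "(L x, Rc m, L' x) \<in> protoD us As" using False unfolding recv_def by auto
      then obtain i where i: "L x = Suc i" "m = us!i" "L' x = Suc (Suc i)" "i < length us"
        by (cases rule: protoD_cases) auto
      have "L0 x \<notin> ?SS" "\<forall>i' < i. \<exists>w\<in>V. L0 w \<in> ?SS \<and> us!i' \<in> set (As!(L0 w - length us - 2))"
        using ix i by auto
      moreover have "\<exists>w\<in>V. L0 w \<in> ?SS \<and> us!i \<in> set (As!(L0 w - length us - 2))"
      proof -
        have "L0 v \<in> ?SS \<and> us!i \<in> set (As!(L0 v - length us - 2))" using v0 mv i by simp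
        then show ?thesis using vV by blast
      qed
      ultimately show ?thesis using i by (auto simp: less_Suc_eq)
    qed
  qed
  then show ?thesis using V' by simp
qed

lemma Inv_steps:
  assumes "(gstep (mkproto us As))\<^sup>*\<^sup>* (V, E, L0) \<gamma>"
    "L0 ` V \<subseteq> insert 1 {length us + 2..length us + length As + 1}"
  shows "fst \<gamma> = V \<and> Inv us As V L0 (snd (snd \<gamma>))"
  using assms(1)
proof (induction rule: rtranclp_induct)
  case base then show ?case using Inv_init[OF assms(2)] by simp
next
  case (step y z)
  obtain V1 E1 L1 where y: "y = (V1, E1, L1)" by (cases y) auto
  obtain V2 E2 L2 where z: "z = (V2, E2, L2)" by (cases z) auto
  show ?case using Inv_step[of us As V L0 L1 E1 V2 E2 L2] step y z by auto
qed

lemma bwd: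
  assumes wf: "\<forall>A\<in>set As. set A \<subseteq> set us"
    and stp: "\<And>P \<gamma> \<gamma>'. step P \<gamma> \<gamma>' \<Longrightarrow> gstep P \<gamma> \<gamma>'"
    and mc: "mincover_with step (mky us As k)"
  shows "setcover (set us, set (map set As), k)"
proof -
  let ?SS = "{length us + 2..length us + length As + 1}"
  let ?P = "mkproto us As"
  obtain \<gamma>0 \<gamma> where i0: "initial_conf ?P \<gamma>0" and r: "(step ?P)\<^sup>*\<^sup>* \<gamma>0 \<gamma>"
    and cv: "covers {length us + 1} \<gamma>" and cd: "card (fst \<gamma>) = Suc k"
    using mc unfolding mincover_with_def mky_def by auto
  obtain V E L0 where g0: "\<gamma>0 = (V, E, L0)" by (cases \<gamma>0) auto
  have ug: "ugraph V E" and lab: "L0 ` V \<subseteq> insert 1 ?SS"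
    using i0 g0 unfolding initial_conf_def by auto
  have finV: "finite V" using ug unfolding ugraph_def by simp
  have r': "(gstep ?P)\<^sup>*\<^sup>* (V, E, L0) \<gamma>"
    using r g0 by (metis (no_types, lifting) mono_rtranclp stp)
  obtain V' E' L where g: "\<gamma> = (V', E', L)" by (cases \<gamma>) auto
  have VV: "V' = V" and inv: "Inv us As V L0 L" using Inv_steps[OF r' lab] g by auto
  obtain x where xV: "x \<in> V" and Lx: "L x = length us + 1" using cv g VV unfolding covers_def by auto
  have x2: "L0 x \<notin> ?SS" and cov: "\<forall>i < length us. \<exists>w\<in>V. L0 w \<in> ?SS \<and> us!i \<in> set (As!(L0 w - length us - 2))"
    using inv xV Lx unfolding Inv_def by force+
  define W where "W = {w\<in>V. L0 w \<in> ?SS}"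
  define C where "C = (\<lambda>w. set (As!(L0 w - length us - 2))) ` W"
  have "W \<subseteq> V - {x}" using x2 unfolding W_def by auto
  then have "card W \<le> card (V - {x})" using finV by (intro card_mono) auto
  also have "\<dots> = k" using cd g VV xV finV by simp
  finally have cW: "card W \<le> k" .
  have "card C \<le> card W" unfolding C_def using finV W_def by (intro card_image_le) auto
  with cW have cC: "card C \<le> k" by simp
  have CS: "C \<subseteq> set (map set As)"
  proof
    fix c assume "c \<in> C"
    then obtain w where "w \<in> W" "c = set (As!(L0 w - length us - 2))" unfolding C_def by auto
    moreover have "L0 w - length us - 2 < length As" using \<open>w \<in> W\<close> unfolding W_def by auto
    ultimately show "c \<in> set (map set As)" by auto
  qed
  have "\<Union>C \<subseteq> set us" using CS wf by auto
  moreover have "set us \<subseteq> \<Union>C"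
  proof
    fix u assume "u \<in> set us"
    then obtain i where "i < length us" "u = us!i" by (auto simp: in_set_conv_nth)
    then obtain w where "w \<in> V" "L0 w \<in> ?SS" "u \<in> set (As!(L0 w - length us - 2))" using cov by blast
    then show "u \<in> \<Union>C" unfolding C_def W_def by blast
  qed
  ultimately have "\<Union>C = set us" by blast
  then show ?thesis unfolding setcover_def using CS cC by auto
qed


lemma fwd:
  assumes stp: "\<And>P V E L L' v m. ugraph V E \<Longrightarrow> v \<in> V \<Longrightarrow> (L v, Bc m, L' v) \<in> trans P \<Longrightarrow>
      (\<forall>u\<in>V. (v, u) \<in> E \<longrightarrow> recv P (L u) m (L' u)) \<Longrightarrow>
      (\<forall>u\<in>V. u \<noteq> v \<and> (v, u) \<notin> E \<longrightarrow> L' u = L u) \<Longrightarrow> step P (V, E, L) (V, E, L')"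
    and sc: "setcover (set us, set (map set As), k)"
  shows "mincover_with step (mky us As k)"
proof -
  let ?n = "length us"
  let ?P = "mkproto us As"
  obtain C where CS: "C \<subseteq> set (map set As)" and cC: "card C \<le> k" and UC: "\<Union>C = set us"
    using sc unfolding setcover_def by auto
  have finC: "finite C" using CS finite_subset by blast
  obtain cs where dcs: "distinct cs" and scs: "set cs = C" using finite_distinct_list[OF finC] by blast
  have lcs: "length cs \<le> k" using dcs scs cC distinct_card by fastforce
  define idx where "idx c = (SOME j. j < length As \<and> c = set (As!j))" for c
  have ex: "\<exists>j. j < length As \<and> c = set (As!j)" if cin: "c \<in> C" for c
  proof -
    have "c \<in> set ` set As" using cin CS by auto
    then obtain A where "A \<in> set As" "c = set A" by auto
    then show "\<exists>j. j < length As \<and> c = set (As!j)" by (auto simp: in_set_conv_nth)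
  qed
  have idx: "idx c < length As \<and> c = set (As!(idx c))" if "c \<in> C" for c
  proof -
    have "\<exists>j. j < length As \<and> c = set (As!j)" using ex that .
    then show ?thesis unfolding idx_def by (rule someI_ex)
  qed
  define V where "V = {0..k}"
  define E where "E = {(0, v) | v. v \<in> {1..k}} \<union> {(v, 0) | v. v \<in> {1..k}}"
  define L where "L v = (if 1 \<le> v \<and> v \<le> length cs then ?n + 2 + idx (cs!(v-1)) else 1)" for v
  define Li where "Li i = L(0 := Suc i)" for i
  have ug: "ugraph V E" unfolding ugraph_def V_def E_def by auto
  have csC: "cs!(v-1) \<in> C" if "1 \<le> v" "v \<le> length cs" for v
    using that scs by auto
  have "L v \<in> insert 1 {?n + 2..?n + length As + 1}" for v
  proof (cases "1 \<le> v \<and> v \<le> length cs")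
    case True
    then have "idx (cs!(v-1)) < length As" using csC idx by blast
    then show ?thesis using True unfolding L_def by auto
  qed (auto simp: L_def)
  then have "L ` V \<subseteq> insert 1 {?n + 2..?n + length As + 1}" by blast
  then have init: "initial_conf ?P (V, E, L)"
    unfolding initial_conf_def using ug by simp
  have L0: "Li 0 = L" unfolding Li_def L_def by auto
  have reach: "(step ?P)\<^sup>*\<^sup>* (V, E, L) (V, E, Li i)" if "i \<le> ?n" for i
    using that
  proof (induction i)
    case 0 then show ?case using L0 by simp
  next
    case (Suc i)
    then have il: "i < ?n" by simp
    have "us!i \<in> \<Union>C" using UC il by simp
    then obtain c where cC': "c \<in> C" and uc: "us!i \<in> c" by blast
    obtain p where "p < length cs" "cs!p = c" using scs cC' by (auto simp: in_set_conv_nth)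
    then obtain v where v: "1 \<le> v" "v \<le> length cs" "cs!(v-1) = c"
      by (intro that[of "Suc p"]) auto
    have vV: "v \<in> V" using v lcs unfolding V_def by auto
    have Lv: "L v = ?n + 1 + (idx c + 1)" using v unfolding L_def by simp
    have tv: "(Li i v, Bc (us!i), Li (Suc i) v) \<in> trans ?P"
    proof -
      have "Li i v = L v" "Li (Suc i) v = L v" using v unfolding Li_def by auto
      moreover have "(?n + 1 + (idx c + 1), Bc (us!i), ?n + 1 + (idx c + 1)) \<in> protoD us As"
        unfolding protoD_def using idx[OF cC'] uc by (intro UnI2 CollectI) (rule exI[of _ "idx c + 1"], auto)
      ultimately show ?thesis using Lv by simp
    qed
    have rc: "\<forall>u\<in>V. (v, u) \<in> E \<longrightarrow> recv ?P (Li i u) (us!i) (Li (Suc i) u)"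
    proof (intro ballI impI)
      fix u assume "u \<in> V" "(v, u) \<in> E"
      then have u0: "u = 0" using v unfolding E_def by auto
      have "(Suc i, Rc (us!i), Suc (Suc i)) \<in> protoD us As" unfolding protoD_def using il by blast
      then show "recv ?P (Li i u) (us!i) (Li (Suc i) u)" using u0 unfolding recv_def Li_def by simp
    qed
    have ot: "\<forall>u\<in>V. u \<noteq> v \<and> (v, u) \<notin> E \<longrightarrow> Li (Suc i) u = Li i u"
    proof (intro ballI impI)
      fix u assume "u \<in> V" "u \<noteq> v \<and> (v, u) \<notin> E"
      then have "u \<noteq> 0" using v vV unfolding E_def V_def by auto
      then show "Li (Suc i) u = Li i u" unfolding Li_def by simp
    qed
    have "step ?P (V, E, Li i) (V, E, Li (Suc i))" using stp[OF ug vV tv rc ot] .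
    moreover have "(step ?P)\<^sup>*\<^sup>* (V, E, L) (V, E, Li i)" using Suc.IH Suc.prems by simp
    ultimately show ?case by (rule rtranclp.rtrancl_into_rtrancl[rotated])
  qed
  have "covers {?n + 1} (V, E, Li ?n)" unfolding covers_def V_def Li_def by auto
  moreover have "card V = Suc k" unfolding V_def by simp
  ultimately show ?thesis unfolding mincover_with_def mky_def prod.case using init reach[of ?n]
    by (intro exI[of _ "(V, E, L)"] exI[of _ "(V, E, Li ?n)"]) simp
qed

lemma rstep_intro: "ugraph V E \<Longrightarrow> v \<in> V \<Longrightarrow> (L v, Bc m, L' v) \<in> trans P \<Longrightarrow>
      (\<forall>u\<in>V. (v, u) \<in> E \<longrightarrow> recv P (L u) m (L' u)) \<Longrightarrow>
      (\<forall>u\<in>V. u \<noteq> v \<and> (v, u) \<notin> E \<longrightarrow> L' u = L u) \<Longrightarrow> rstep P (V, E, L) (V, E, L')"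
  unfolding rstep_def by auto

lemma lstep_intro: "ugraph V E \<Longrightarrow> v \<in> V \<Longrightarrow> (L v, Bc m, L' v) \<in> trans P \<Longrightarrow>
      (\<forall>u\<in>V. (v, u) \<in> E \<longrightarrow> recv P (L u) m (L' u)) \<Longrightarrow>
      (\<forall>u\<in>V. u \<noteq> v \<and> (v, u) \<notin> E \<longrightarrow> L' u = L u) \<Longrightarrow> lstep P (V, E, L) (V, E, L')"
  unfolding lstep_def by auto

theorem semantics:
  assumes wf: "\<forall>A\<in>set As. set A \<subseteq> set us"
  shows "setcover (set us, set (map set As), k) \<longleftrightarrow> mincover_rec (mky us As k)"
    and "setcover (set us, set (map set As), k) \<longleftrightarrow> mincover_lossy (mky us As k)"
proof -
  have a: "mincover_with rstep (mky us As k)" if "setcover (set us, set (map set As), k)"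
    by (rule fwd[of rstep, OF _ that]) (rule rstep_intro)
  have b: "mincover_with lstep (mky us As k)" if "setcover (set us, set (map set As), k)"
    by (rule fwd[of lstep, OF _ that]) (rule lstep_intro)
  show "setcover (set us, set (map set As), k) \<longleftrightarrow> mincover_rec (mky us As k)"
    unfolding mincover_rec_def using a bwd[OF wf rstep_gstep] by blast
  show "setcover (set us, set (map set As), k) \<longleftrightarrow> mincover_lossy (mky us As k)"
    unfolding mincover_lossy_def using b bwd[OF wf lstep_gstep] by blast
qed


lemma fst_dcoll: "map fst (dcoll c us) = [c..<c + length us]"
proof (induction us arbitrary: c)
  case Nil then show ?case by simp
next
  case (Cons u r)
  have "[c..<c + length (u # r)] = c # [Suc c..<Suc c + length r]" by (subst upt_conv_Cons) auto
  then show ?case using Cons by simp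
qed

lemma distinct_dcoll: "distinct (dcoll c us)"
  using fst_dcoll[of c us] by (metis distinct_map distinct_upt)

lemma set_dcoll: "set (dcoll c us) = {(c + i, Rc (us!i), Suc (c + i)) | i. i < length us}"
proof (induction us arbitrary: c)
  case Nil then show ?case by simp
next
  case (Cons u r)
  have "{(c + i, Rc ((u # r)!i), Suc (c + i)) | i. i < length (u # r)} =
     insert (c, Rc u, Suc c) {(Suc c + i, Rc (r!i), Suc (Suc c + i)) | i. i < length r}"
    (is "?L = ?R")
  proof
    show "?L \<subseteq> ?R"
    proof
      fix x assume "x \<in> ?L"
      then obtain i where "x = (c + i, Rc ((u # r)!i), Suc (c + i))" "i < Suc (length r)" by auto
      then show "x \<in> ?R" by (cases i) auto
    qed
    show "?R \<subseteq> ?L"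
    proof
      fix x assume "x \<in> ?R"
      then show "x \<in> ?L"
      proof
        assume "x = (c, Rc u, Suc c)" then show ?thesis by (auto intro: exI[of _ 0])
      next
        assume "x \<in> {(Suc c + i, Rc (r!i), Suc (Suc c + i)) | i. i < length r}"
        then obtain i where "x = (Suc c + i, Rc (r!i), Suc (Suc c + i))" "i < length r" by auto
        then show ?thesis by (auto intro!: exI[of _ "Suc i"])
      qed
    qed
  qed
  then show ?case using Cons by simp
qed

lemma dsetl_fst: "t \<in> set (dsetl c As) \<Longrightarrow> fst t > c"
  by (induction As arbitrary: c) fastforce+

lemma distinct_dsetl: "\<forall>A\<in>set As. distinct A \<Longrightarrow> distinct (dsetl c As)"
proof (induction As arbitrary: c)
  case Nil then show ?case by simp
next
  case (Cons A r)
  have "distinct (map (\<lambda>a. (Suc c, Bc a, Suc c)) A)" using Cons.prems by (auto simp: distinct_map inj_on_def)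
  moreover have "distinct (dsetl (Suc c) r)" using Cons by simp
  moreover have "set (map (\<lambda>a. (Suc c, Bc a, Suc c)) A) \<inter> set (dsetl (Suc c) r) = {}"
    using dsetl_fst[of _ "Suc c" r] by fastforce
  ultimately show ?case by simp
qed

lemma set_dsetl: "set (dsetl c As) = {(c + j, Bc a, c + j) | j a. 1 \<le> j \<and> j \<le> length As \<and> a \<in> set (As!(j-1))}"
proof (induction As arbitrary: c)
  case Nil then show ?case by simp
next
  case (Cons A r)
  have "{(c + j, Bc a, c + j) | j a. 1 \<le> j \<and> j \<le> length (A # r) \<and> a \<in> set ((A # r)!(j-1))} =
     (\<lambda>a. (Suc c, Bc a, Suc c)) ` set A \<union>
     {(Suc c + j, Bc a, Suc c + j) | j a. 1 \<le> j \<and> j \<le> length r \<and> a \<in> set (r!(j-1))}"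
    (is "?L = ?R")
  proof
    show "?L \<subseteq> ?R"
    proof
      fix x assume "x \<in> ?L"
      then obtain j a where h: "x = (c + j, Bc a, c + j)" "1 \<le> j" "j \<le> Suc (length r)" "a \<in> set ((A # r)!(j-1))" by auto
      show "x \<in> ?R"
      proof (cases "j = 1")
        case True then show ?thesis using h by auto
      next
        case False
        then obtain j' where j': "j = Suc (Suc j')" using h(2) by (cases j; cases "j - 1") auto
        then show ?thesis using h by (auto intro!: exI[of _ "Suc j'"])
      qed
    qed
    show "?R \<subseteq> ?L"
    proof
      fix x assume "x \<in> ?R"
      then show "x \<in> ?L"
      proof
        assume "x \<in> (\<lambda>a. (Suc c, Bc a, Suc c)) ` set A"
        then obtain a where "a \<in> set A" "x = (Suc c, Bc a, Suc c)" by auto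
        then show ?thesis by (simp only: mem_Collect_eq) (rule exI[of _ 1], rule exI[of _ a], simp)
      next
        assume "x \<in> {(Suc c + j, Bc a, Suc c + j) | j a. 1 \<le> j \<and> j \<le> length r \<and> a \<in> set (r!(j-1))}"
        then obtain j a where "x = (Suc c + j, Bc a, Suc c + j)" "1 \<le> j" "j \<le> length r" "a \<in> set (r!(j-1))" by auto
        then show ?thesis by (auto intro!: exI[of _ "Suc j"] simp: nth_Cons')
      qed
    qed
  qed
  then show ?case using Cons by simp
qed

lemma set_D: "set (dcoll 1 us @ dsetl (length us + 1) As) = protoD us As"
  unfolding protoD_def set_append set_dcoll set_dsetl by (simp add: add.commute)

lemma distinct_D: "\<forall>A\<in>set As. distinct A \<Longrightarrow> distinct (dcoll 1 us @ dsetl (length us + 1) As)"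
  using distinct_dcoll distinct_dsetl by (auto simp: set_dcoll set_dsetl)

lemma cl_add: "cl c (a + b) = cl c a @ cl (c + a) b"
proof -
  have "[c..<c + (a + b)] = [c..<c + a] @ [c + a..<c + a + b]"
    using upt_add_eq_append[of c "c + a" b] by (simp add: add.assoc)
  then show ?thesis unfolding cl_def by simp
qed

lemma enc_bins: "enc_list (map bin xs) = TL # concat (map qel xs) @ [TR]"
  by (simp add: enc_list_def qel_def[abs_def] o_def)

lemma encset_nat: "distinct xs \<Longrightarrow> encodes_set natenc (set xs) (enc_list (map bin xs))"
  unfolding encodes_set_def natenc_def
  by (rule exI[of _ xs], rule exI[of _ "map bin xs"]) (auto simp: list_all2_conv_all_nth)

lemma tw_enc: "TL # concat (map tw ds) @ [TR] =
   enc_list (map (\<lambda>t. case t of (q, a, q') \<Rightarrow> enc_list [bin q, enc_act a, bin q']) ds)"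
proof -
  have "concat (map tw ds) = concat (map (\<lambda>w. TL # w @ [TR])
     (map (\<lambda>t. case t of (q, a, q') \<Rightarrow> enc_list [bin q, enc_act a, bin q']) ds))"
    by (induction ds) (auto simp: tw_def split: prod.splits)
  then show ?thesis by (simp add: enc_list_def)
qed

lemma encset_tr: "distinct ds \<Longrightarrow> encodes_set transenc (set ds) (TL # concat (map tw ds) @ [TR])"
  unfolding encodes_set_def tw_enc
  by (rule exI[of _ ds], rule exI[of _ "map (\<lambda>t. case t of (q, a, q') \<Rightarrow> enc_list [bin q, enc_act a, bin q']) ds"])
    (auto simp: list_all2_conv_all_nth transenc_def split: prod.splits)

lemma enc_out:
  assumes "distinct us" "\<forall>A\<in>set As. distinct A"
  shows "encodes_mc (mky us As k) (fout (wenc us As k))"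
proof -
  let ?n = "length us" and ?m = "length As"
  let ?qs = "[1..<?n + ?m + 2]" and ?is = "1 # [?n + 2..<?n + ?m + 2]"
  let ?ds = "dcoll 1 us @ dsetl (?n + 1) As"
  have nm: "?n + ?m + 2 = Suc (?n + ?m + 1)" by simp
  have s1: "set ?qs = {1..?n + ?m + 1}" unfolding nm by (simp only: set_upt atLeastLessThanSuc_atLeastAtMost)
  have s2: "set ?is = insert 1 {?n + 2..?n + ?m + 1}" unfolding nm
    by (simp only: set_upt atLeastLessThanSuc_atLeastAtMost list.set)
  have q: "encodes_set natenc {1..?n + ?m + 1} (enc_list (map bin ?qs))"
    unfolding s1[symmetric] by (rule encset_nat) simp
  have i: "encodes_set natenc (insert 1 {?n + 2..?n + ?m + 1}) (enc_list (map bin ?is))"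
  proof -
    have "1 \<notin> set [?n + 2..<?n + ?m + 2]" by (simp only: set_upt) auto
    then have "distinct ?is" by (simp only: distinct.simps distinct_upt) simp
    then show ?thesis unfolding s2[symmetric] by (rule encset_nat)
  qed
  have mm: "encodes_set natenc (set us) (enc_list (map bin us))" using encset_nat assms(1) .
  have d: "encodes_set transenc (protoD us As) (TL # concat (map tw ?ds) @ [TR])"
    using encset_tr[OF distinct_D[OF assms(2)]] set_D by simp
  have f: "encodes_set natenc {?n + 1} (enc_list (map bin [?n + 1]))"
    using encset_nat[of "[?n + 1]"] by simp
  have e1: "concat (map qel ?qs) = qel 1 @ cl 2 ?n @ cl (?n + 2) ?m"
  proof -
    have "?qs = [1..<1 + Suc (?n + ?m)]" by simp
    then have "concat (map qel ?qs) = cl 1 (Suc (?n + ?m))" unfolding cl_def by simp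
    also have "\<dots> = qel 1 @ cl 2 (?n + ?m)" unfolding cl_Suc by (simp add: numeral_2_eq_2)
    also have "cl 2 (?n + ?m) = cl 2 ?n @ cl (2 + ?n) ?m" by (rule cl_add)
    finally show ?thesis by (simp add: add.commute)
  qed
  have e2: "concat (map qel ?is) = qel 1 @ cl (?n + 2) ?m" by (simp add: cl_def)
  have e3: "enc_list (map bin us) = TL # ulist us @ [TR]"
    by (simp add: enc_bins ulist_def qel_def[abs_def] elt_def[abs_def])
  show ?thesis
    unfolding encodes_mc_def mky_def mkproto_def prod.case
    apply (rule exI[of _ "enc_list (map bin ?qs)"], rule exI[of _ "enc_list (map bin ?is)"],
        rule exI[of _ "enc_list (map bin us)"], rule exI[of _ "TL # concat (map tw ?ds) @ [TR]"],
        rule exI[of _ "enc_list (map bin [?n + 1])"])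
    using q i mm d f
    apply (simp only: simp_thms)
    unfolding fout_wenc enc_bins e1 e2
    by (simp add: enc_list_def e3[unfolded enc_bins] qel_def)
qed


lemma list_all2_natenc: "list_all2 natenc xs ws \<Longrightarrow> ws = map bin xs"
  by (induction rule: list_all2_induct) (auto simp: natenc_def)

lemma list_all2_sets: "list_all2 (encodes_set natenc) Ss ws \<Longrightarrow>
   \<exists>As. Ss = map set As \<and> ws = map (\<lambda>A. enc_list (map bin A)) As \<and> (\<forall>A\<in>set As. distinct A)"
proof (induction rule: list_all2_induct)
  case Nil then show ?case by simp
next
  case (Cons S Ss w ws)
  obtain As where h: "Ss = map set As" "ws = map (\<lambda>A. enc_list (map bin A)) As" "\<forall>A\<in>set As. distinct A"
    using Cons by blast
  obtain A vs where a: "distinct A" "set A = S" "list_all2 natenc A vs" "w = enc_list vs"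
    using Cons(1) unfolding encodes_set_def by blast
  have "vs = map bin A" using list_all2_natenc a(3) .
  then show ?case using h a by (intro exI[of _ "A # As"]) simp
qed

lemma decode:
  assumes "wf_sc x" "encodes_sc x w"
  shows "\<exists>us As k. x = (set us, set (map set As), k) \<and> w = wenc us As k \<and> distinct us \<and>
     (\<forall>A\<in>set As. distinct A) \<and> (\<forall>A\<in>set As. set A \<subseteq> set us)"
proof -
  obtain U S k where x: "x = (U, S, k)" by (cases x) auto
  obtain wU wS where e: "encodes_set natenc U wU" "encodes_set (encodes_set natenc) S wS"
      "w = enc_list [wU, wS, bin k]"
    using assms(2) unfolding x encodes_sc_def by auto
  obtain us ws where u: "distinct us" "set us = U" "list_all2 natenc us ws" "wU = enc_list ws"
    using e(1) unfolding encodes_set_def by blast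
  obtain Ss vs where s: "distinct Ss" "set Ss = S" "list_all2 (encodes_set natenc) Ss vs" "wS = enc_list vs"
    using e(2) unfolding encodes_set_def by blast
  obtain As where a: "Ss = map set As" "vs = map (\<lambda>A. enc_list (map bin A)) As" "\<forall>A\<in>set As. distinct A"
    using list_all2_sets[OF s(3)] by blast
  have "ws = map bin us" using list_all2_natenc u(3) .
  then have w: "w = wenc us As k" using e(3) u(4) s(4) a(2) by (simp add: wenc_eq)
  have "\<forall>A\<in>set As. set A \<subseteq> set us"
    using assms(1) unfolding x wf_sc_def using u(2) s(2) a(1) by auto
  then show ?thesis using x u(1,2) s(2) a w by auto
qed

lemma reduction:
  assumes lc: "logspace_computes M fout"
  shows "logspace_reduces_sc_to mincover_rec \<and> logspace_reduces_sc_to mincover_lossy"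
proof -
  have main: "\<exists>y. wf_mc y \<and> encodes_mc y (fout w) \<and> (setcover x \<longleftrightarrow> mincover_rec y) \<and>
     (setcover x \<longleftrightarrow> mincover_lossy y)" if a12: "wf_sc x" "encodes_sc x w" for x w
  proof -
    obtain us As k where h: "x = (set us, set (map set As), k)" "w = wenc us As k" "distinct us"
      "\<forall>A\<in>set As. distinct A" "\<forall>A\<in>set As. set A \<subseteq> set us"
      using decode[OF a12] by blast
    show ?thesis
      using wf_mky[OF h(5)] enc_out[OF h(3,4), of k] semantics[OF h(5), of k] h(1,2)
      by (intro exI[of _ "mky us As k"]) simp
  qed
  show ?thesis unfolding logspace_reduces_sc_to_def using lc main by blast
qed


datatype cont = CAdv | CRew | CHlt
datatype ctl = Run nat sg "op list" nat cont | Rd nat sg | Rwd nat | Halt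

fun dls :: "ctl \<Rightarrow> tok option \<Rightarrow> bool option \<Rightarrow> ctl \<times> dir \<times> bool option \<times> dir \<times> tok option" where
  "dls (Run p \<sigma> [] sub k) a b = (case k of
      CAdv \<Rightarrow> (Rd p \<sigma>, Rt, b, St, None)
    | CRew \<Rightarrow> (Rwd (min 5 (Suc p)), Lt, b, St, None)
    | CHlt \<Rightarrow> (Halt, St, b, St, None))"
| "dls (Run p \<sigma> (Emit t # r) sub k) a b = (Run p \<sigma> r 0 k, St, b, St, Some t)"
| "dls (Run p \<sigma> (EmitC # r) sub k) a b = (if sub = 0 then (Run p \<sigma> (EmitC # r) 1 k, St, b, Rt, None)
     else if sub = 1 then (case b of
         Some x \<Rightarrow> (Run p \<sigma> (EmitC # r) 1 k, St, b, Rt, Some (if x then T1 else T0))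
       | None \<Rightarrow> (Run p \<sigma> (EmitC # r) 2 k, St, b, Lt, None))
     else (case b of
         Some x \<Rightarrow> (Run p \<sigma> (EmitC # r) 2 k, St, b, Lt, None)
       | None \<Rightarrow> (Run p \<sigma> r 0 k, St, b, St, None)))"
| "dls (Run p \<sigma> (Inc # r) sub k) a b = (if sub = 0 then (Run p \<sigma> (Inc # r) 1 k, St, b, Rt, None)
     else if sub = 1 then (if b = Some True then (Run p \<sigma> (Inc # r) 1 k, St, Some False, Rt, None)
         else (Run p \<sigma> (Inc # r) 2 k, St, Some True, Lt, None))
     else (case b of
         Some x \<Rightarrow> (Run p \<sigma> (Inc # r) 2 k, St, b, Lt, None)
       | None \<Rightarrow> (Run p \<sigma> r 0 k, St, b, St, None)))"
| "dls (Run p \<sigma> (Rst # r) sub k) a b = (if sub = 0 then (Run p \<sigma> (Rst # r) 1 k, St, b, Rt, None)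
     else if sub = 1 then (case b of
         Some x \<Rightarrow> (Run p \<sigma> (Rst # r) 1 k, St, b, Rt, None)
       | None \<Rightarrow> (Run p \<sigma> (Rst # r) 2 k, St, b, Lt, None))
     else (case b of
         Some x \<Rightarrow> (Run p \<sigma> (Rst # r) 2 k, St, None, Lt, None)
       | None \<Rightarrow> (Run p \<sigma> r 0 k, St, b, St, None)))"
| "dls (Rd p \<sigma>) a b = (case a of
      Some t \<Rightarrow> (Run p (dlt p \<sigma> t) (tops p \<sigma> t) 0 CAdv, St, b, St, None)
    | None \<Rightarrow> (Run p \<sigma> (endops p \<sigma>) 0 (if p = 5 then CHlt else CRew), St, b, St, None))"
| "dls (Rwd p) a b = (case a of
      Some t \<Rightarrow> (Rwd p, Lt, b, St, None)
    | None \<Rightarrow> (Run p sg0 (startops p) 0 CAdv, St, b, St, None))"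
| "dls Halt a b = (Halt, St, b, St, None)"

definition SG :: "sg set" where "SG = {..3} \<times> {..7} \<times> {..1}"

definition TBL :: "op list set" where
  "TBL = startops ` {..<6} \<union> (\<lambda>(p, \<sigma>). endops p \<sigma>) ` ({..<6} \<times> SG) \<union>
     (\<lambda>(p, \<sigma>, t). tops p \<sigma> t) ` ({..<6} \<times> SG \<times> UNIV)"

definition OPS :: "op list set" where
  "OPS = (\<Union>l\<in>TBL. (\<lambda>i. drop i l) ` {..length l})"

definition CS :: "ctl set" where
  "CS = (\<lambda>(p, \<sigma>, ops, sub, k). Run p \<sigma> ops sub k) ` ({..<6} \<times> SG \<times> OPS \<times> {..<3} \<times> UNIV)
     \<union> (\<lambda>(p, \<sigma>). Rd p \<sigma>) ` ({..<6} \<times> SG) \<union> Rwd ` {..<6} \<union> {Halt}"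

lemma UNIV_tok: "(UNIV :: tok set) = {T0, T1, TL, TR}"
  using tok.exhaust by auto
lemma UNIV_cont: "(UNIV :: cont set) = {CAdv, CRew, CHlt}"
  using cont.exhaust by auto

lemma finite_SG: "finite SG" unfolding SG_def by simp
lemma finite_TBL: "finite TBL" unfolding TBL_def using finite_SG by (simp add: UNIV_tok)
lemma finite_OPS: "finite OPS" unfolding OPS_def using finite_TBL by simp
lemma finite_CS: "finite CS" unfolding CS_def using finite_SG finite_OPS by (simp add: UNIV_cont)

lemma Run_CS[simp]: "Run p \<sigma> ops sub k \<in> CS \<longleftrightarrow> p < 6 \<and> \<sigma> \<in> SG \<and> ops \<in> OPS \<and> sub < 3"
proof
  assume "Run p \<sigma> ops sub k \<in> CS" then show "p < 6 \<and> \<sigma> \<in> SG \<and> ops \<in> OPS \<and> sub < 3"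
    unfolding CS_def by auto
next
  assume h: "p < 6 \<and> \<sigma> \<in> SG \<and> ops \<in> OPS \<and> sub < 3"
  have "Run p \<sigma> ops sub k \<in> (\<lambda>(p, \<sigma>, ops, sub, k). Run p \<sigma> ops sub k) ` ({..<6} \<times> SG \<times> OPS \<times> {..<3} \<times> UNIV)"
    using h by (intro image_eqI[of _ _ "(p, \<sigma>, ops, sub, k)"]) auto
  then show "Run p \<sigma> ops sub k \<in> CS" unfolding CS_def by blast
qed
lemma Rd_CS[simp]: "Rd p \<sigma> \<in> CS \<longleftrightarrow> p < 6 \<and> \<sigma> \<in> SG"
  unfolding CS_def by auto
lemma Rwd_CS[simp]: "Rwd p \<in> CS \<longleftrightarrow> p < 6"
  unfolding CS_def by auto
lemma Halt_CS[simp]: "Halt \<in> CS"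
  unfolding CS_def by auto

lemma OPS_tl: "x # r \<in> OPS \<Longrightarrow> r \<in> OPS"
  unfolding OPS_def
proof (elim UN_E imageE)
  fix l i assume "l \<in> TBL" "i \<in> {..length l}" "x # r = drop i l"
  then have "r = drop (Suc i) l" "Suc i \<in> {..length l}"
    by (metis drop_Suc list.sel(3) tl_drop, metis Suc_leI atMost_iff drop_eq_Nil2 leI list.distinct(1))
  then show "r \<in> (\<Union>l\<in>TBL. (\<lambda>i. drop i l) ` {..length l})" using \<open>l \<in> TBL\<close> by blast
qed

lemma TBL_OPS: "l \<in> TBL \<Longrightarrow> l \<in> OPS"
  unfolding OPS_def by (rule UN_I[of l], assumption) (rule image_eqI[of _ _ 0]; simp)

lemma Nil_OPS[simp]: "[] \<in> OPS"
proof -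
  have "startops 0 \<in> TBL" unfolding TBL_def by (rule UnI1, rule UnI1, rule image_eqI[of _ _ 0]) auto
  then show ?thesis unfolding OPS_def by (intro UN_I[of "startops 0"]) (auto intro!: image_eqI[of _ _ "length (startops 0)"])
qed

lemma sg0_SG[simp]: "sg0 \<in> SG" by (simp add: sg0_def SG_def)

lemma dlt_SG: "\<sigma> \<in> SG \<Longrightarrow> dlt p \<sigma> t \<in> SG"
  unfolding SG_def dlt_def by (auto split: tok.splits)

lemma startops_OPS: "p < 6 \<Longrightarrow> startops p \<in> OPS"
  by (rule TBL_OPS) (auto simp: TBL_def)
lemma endops_OPS: "p < 6 \<Longrightarrow> \<sigma> \<in> SG \<Longrightarrow> endops p \<sigma> \<in> OPS"
  by (rule TBL_OPS) (auto simp: TBL_def)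
lemma tops_OPS: "p < 6 \<Longrightarrow> \<sigma> \<in> SG \<Longrightarrow> tops p \<sigma> t \<in> OPS"
proof (rule TBL_OPS)
  assume "p < 6" "\<sigma> \<in> SG"
  then have "tops p \<sigma> t \<in> (\<lambda>(p, \<sigma>, t). tops p \<sigma> t) ` ({..<6} \<times> SG \<times> UNIV)"
    by (intro image_eqI[of _ _ "(p, \<sigma>, t)"]) auto
  then show "tops p \<sigma> t \<in> TBL" unfolding TBL_def by blast
qed

lemma dls_CS: "c \<in> CS \<Longrightarrow> fst (dls c a b) \<in> CS"
proof (cases c)
  case (Run p \<sigma> ops sub k)
  assume cs: "c \<in> CS"
  then have h: "p < 6" "\<sigma> \<in> SG" "ops \<in> OPS" "sub < 3" using Run by auto
  show ?thesis
  proof (cases ops)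
    case Nil then show ?thesis using Run h by (cases k) auto
  next
    case (Cons x r)
    then have "r \<in> OPS" using h OPS_tl by blast
    then show ?thesis using Run h Cons by (cases x) (auto split: option.splits)
  qed
next
  case (Rd p \<sigma>)
  assume "c \<in> CS"
  then show ?thesis using Rd by (auto split: option.splits simp: dlt_SG tops_OPS endops_OPS)
next
  case (Rwd p)
  assume "c \<in> CS"
  then show ?thesis using Rwd by (auto split: option.splits simp: startops_OPS)
qed simp


definition enc :: "ctl \<Rightarrow> nat" where "enc = to_nat_on CS"
definition dec :: "nat \<Rightarrow> ctl" where "dec = from_nat_into CS"

definition Mach :: tm where
  "Mach = \<lparr>nst = card CS, q0 = enc (Run 0 sg0 (startops 0) 0 CAdv), qf = enc Halt,
     dl = (\<lambda>q a b. case dls (dec q) a b of (c', r) \<Rightarrow> (enc c', r))\<rparr>"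

lemma countable_CS: "countable CS" using finite_CS by (rule countable_finite)

lemma enc_lt: "c \<in> CS \<Longrightarrow> enc c < card CS"
  using to_nat_on_finite[OF finite_CS] unfolding enc_def bij_betw_def by auto

lemma dec_enc[simp]: "c \<in> CS \<Longrightarrow> dec (enc c) = c"
  unfolding enc_def dec_def using countable_CS by simp

lemma enc_inj: "c \<in> CS \<Longrightarrow> d \<in> CS \<Longrightarrow> enc c = enc d \<longleftrightarrow> c = d"
  unfolding enc_def using countable_CS by simp

lemma dec_CS: "dec q \<in> CS"
  unfolding dec_def by (rule from_nat_into) (use Halt_CS in blast)

lemma wf_Mach: "wf_tm Mach"
proof -
  have "Run 0 sg0 (startops 0) 0 CAdv \<in> CS" using startops_OPS[of 0] by simp
  moreover have "enc (fst (dls (dec q) a b)) < card CS" for q a b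
    using dls_CS[OF dec_CS] enc_lt by blast
  moreover have "fst (case dls (dec q) a b of (c', r) \<Rightarrow> (enc c', r)) = enc (fst (dls (dec q) a b))" for q a b
    by (simp split: prod.splits)
  ultimately show ?thesis
    unfolding wf_tm_def Mach_def using enc_lt Halt_CS by simp
qed

lemma step_enc:
  assumes "c \<in> CS" "c \<noteq> Halt"
  shows "tm_step Mach w (enc c, i, t, h, out) = (case dls c (read_in w i) (t h) of (c', di, s, dw, ob) \<Rightarrow>
     (enc c', min (length w + 1) (mv di i), t(h := s), mv dw h, out @ (case ob of None \<Rightarrow> [] | Some a \<Rightarrow> [a])))"
proof -
  have "enc c \<noteq> enc Halt" using assms enc_inj by simp
  then show ?thesis unfolding tm_step_def Mach_def using assms by (simp split: prod.splits)
qed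

lemma step_halt: "tm_step Mach w (enc Halt, x) = (enc Halt, x)"
  unfolding tm_step_def Mach_def by (simp split: prod.splits)

definition RB :: "tok list \<Rightarrow> nat \<Rightarrow> tmconf \<Rightarrow> tmconf \<Rightarrow> bool" where
  "RB w B x y \<longleftrightarrow> (\<exists>n. (tm_step Mach w ^^ n) x = y \<and> (\<forall>m\<le>n. cwhead ((tm_step Mach w ^^ m) x) \<le> B))"

lemma cwhead_simp[simp]: "cwhead (q, i, t, h, out) = h" by (simp add: cwhead_def)

lemma RB_refl: "cwhead x \<le> B \<Longrightarrow> RB w B x x"
  unfolding RB_def by (intro exI[of _ 0]) simp

lemma RB_trans: "RB w B x y \<Longrightarrow> RB w B y z \<Longrightarrow> RB w B x z"
proof -
  assume "RB w B x y" "RB w B y z"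
  then obtain n1 n2 where 1: "(tm_step Mach w ^^ n1) x = y" "\<forall>m\<le>n1. cwhead ((tm_step Mach w ^^ m) x) \<le> B"
    and 2: "(tm_step Mach w ^^ n2) y = z" "\<forall>m\<le>n2. cwhead ((tm_step Mach w ^^ m) y) \<le> B"
    unfolding RB_def by blast
  have "(tm_step Mach w ^^ (n2 + n1)) x = z" using 1 2 by (simp add: funpow_add)
  moreover have "cwhead ((tm_step Mach w ^^ m) x) \<le> B" if "m \<le> n2 + n1" for m
  proof (cases "m \<le> n1")
    case True then show ?thesis using 1 by simp
  next
    case False
    then have mm: "m = (m - n1) + n1" by simp
    have "(tm_step Mach w ^^ ((m - n1) + n1)) x = (tm_step Mach w ^^ (m - n1)) ((tm_step Mach w ^^ n1) x)"
      by (simp add: funpow_add)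
    then have "(tm_step Mach w ^^ m) x = (tm_step Mach w ^^ (m - n1)) y"
      using 1(1) mm by simp
    then show ?thesis using 2 that False by simp
  qed
  ultimately show ?thesis unfolding RB_def by blast
qed

lemma RB_step: "cwhead x \<le> B \<Longrightarrow> RB w B (tm_step Mach w x) y \<Longrightarrow> RB w B x y"
proof -
  assume h: "cwhead x \<le> B" "RB w B (tm_step Mach w x) y"
  then obtain n where n: "(tm_step Mach w ^^ n) (tm_step Mach w x) = y"
    "\<forall>m\<le>n. cwhead ((tm_step Mach w ^^ m) (tm_step Mach w x)) \<le> B"
    unfolding RB_def by blast
  have "(tm_step Mach w ^^ Suc n) x = y" using n(1) unfolding funpow_Suc_right o_apply .
  moreover have "cwhead ((tm_step Mach w ^^ m) x) \<le> B" if "m \<le> Suc n" for m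
  proof (cases m)
    case 0 then show ?thesis using h(1) by simp
  next
    case (Suc m')
    then have "m' \<le> n" using that by simp
    then have "cwhead ((tm_step Mach w ^^ m') (tm_step Mach w x)) \<le> B" using n(2) by blast
    then show ?thesis using Suc by (simp only: funpow_Suc_right o_apply)
  qed
  ultimately show ?thesis unfolding RB_def by blast
qed

lemma RB_dls:
  assumes "c \<in> CS" "c \<noteq> Halt" "h \<le> B" "dls c (read_in w i) (t h) = (c', di, s, dw, ob)"
    "RB w B (enc c', min (length w + 1) (mv di i), t(h := s), mv dw h, out @ (case ob of None \<Rightarrow> [] | Some a \<Rightarrow> [a])) y"
  shows "RB w B (enc c, i, t, h, out) y"
proof -
  have eq: "tm_step Mach w (enc c, i, t, h, out) = (enc c', min (length w + 1) (mv di i), t(h := s), mv dw h,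
      out @ (case ob of None \<Rightarrow> [] | Some a \<Rightarrow> [a]))"
    by (simp only: step_enc[OF assms(1,2)] assms(4) prod.case)
  show ?thesis
  proof (rule RB_step)
    show "cwhead (enc c, i, t, h, out) \<le> B" using assms(3) by (simp only: cwhead_simp)
    show "RB w B (tm_step Mach w (enc c, i, t, h, out)) y" unfolding eq by (rule assms(5))
  qed
qed

definition tape_of :: "tok list \<Rightarrow> nat \<Rightarrow> bool option" where
  "tape_of bs j = (if 1 \<le> j \<and> j \<le> length bs then Some (bs!(j-1) = T1) else None)"

lemma tape_of_0[simp]: "tape_of bs 0 = None" by (simp add: tape_of_def)


lemma Run_CS_sub: "Run p \<sigma> ops 0 k \<in> CS \<Longrightarrow> sub < 3 \<Longrightarrow> Run p \<sigma> ops sub k \<in> CS"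
  by simp
lemma Run_CS_tl: "Run p \<sigma> (x # r) 0 k \<in> CS \<Longrightarrow> Run p \<sigma> r 0 k \<in> CS"
  by simp (blast intro: OPS_tl)

lemmas fui = fun_upd_idem

lemma tape_of_Some: "1 \<le> j \<Longrightarrow> j \<le> length bs \<Longrightarrow> tape_of bs j = Some (bs!(j-1) = T1)"
  by (simp add: tape_of_def)
lemma tape_of_None: "length bs < j \<Longrightarrow> tape_of bs j = None"
  by (simp add: tape_of_def)

lemma min_i: "i \<le> length w + 1 \<Longrightarrow> min (length w + 1) i = i" by simp

lemma emitc_right:
  assumes cs: "Run p \<sigma> (EmitC # r) 0 k \<in> CS" and bits: "set bs \<subseteq> {T0, T1}"
    and iw: "i \<le> length w + 1" and B: "length bs + 1 \<le> B"
  shows "1 \<le> j \<Longrightarrow> j \<le> length bs + 1 \<Longrightarrow> RB w B (enc (Run p \<sigma> (EmitC # r) 1 k), i, tape_of bs, j, out)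
     (enc (Run p \<sigma> (EmitC # r) 2 k), i, tape_of bs, length bs, out @ drop (j - 1) bs)"
proof (induction "length bs + 1 - j" arbitrary: j out)
  case 0
  then have j: "j = length bs + 1" by simp
  have tn: "tape_of bs j = None" using j by (simp add: tape_of_def)
  show ?case
    apply (rule RB_dls[OF Run_CS_sub[OF cs]])
    using B j tn iw by (auto intro!: RB_refl simp: fui)
next
  case (Suc x)
  then have j: "1 \<le> j" "j \<le> length bs" by auto
  have "bs!(j-1) \<in> set bs" using j by (intro nth_mem) simp
  then have bj: "bs!(j-1) \<in> {T0, T1}" using bits by blast
  have ts: "tape_of bs j = Some (bs!(j-1) = T1)" using j by (simp add: tape_of_def)
  have e: "(if bs!(j-1) = T1 then T1 else T0) = bs!(j-1)" using bj by auto
  have d: "drop (j - 1) bs = bs!(j-1) # drop j bs"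
  proof -
    have "j - 1 < length bs" using j by simp
    then have "drop (j-1) bs = bs!(j-1) # drop (Suc (j-1)) bs" by (rule Cons_nth_drop_Suc[symmetric])
    then show ?thesis using j by simp
  qed
  have ih: "RB w B (enc (Run p \<sigma> (EmitC # r) 1 k), i, tape_of bs, Suc j, out @ [bs!(j-1)])
     (enc (Run p \<sigma> (EmitC # r) 2 k), i, tape_of bs, length bs, out @ [bs!(j-1)] @ drop j bs)"
    using Suc.hyps(1)[of "Suc j" "out @ [bs!(j-1)]"] Suc.hyps(2) j by simp
  show ?case
    apply (rule RB_dls[OF Run_CS_sub[OF cs]])
    using B j ts iw ih e d by (auto simp: fui)
qed

lemma left_loop:
  assumes cs: "Run p \<sigma> (X # r) 0 k \<in> CS" and X: "X = EmitC \<or> X = Inc"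
    and iw: "i \<le> length w + 1" and t0: "t 0 = None"
  shows "(\<forall>j'. 1 \<le> j' \<and> j' \<le> h \<longrightarrow> t j' \<noteq> None) \<Longrightarrow> h \<le> B \<Longrightarrow>
    RB w B (enc (Run p \<sigma> (X # r) 2 k), i, t, h, out) (enc (Run p \<sigma> r 0 k), i, t, 0, out)"
proof (induction h)
  case 0
  have fin: "RB w B (enc (Run p \<sigma> r 0 k), i, t, 0, out) (enc (Run p \<sigma> r 0 k), i, t, 0, out)" by (rule RB_refl) simp
  from X show ?case
  proof (elim disjE)
    assume xe: "X = EmitC"
    show ?case unfolding xe
      by (rule RB_dls[OF Run_CS_sub[OF cs[unfolded xe]]]) (use fin t0 iw in \<open>auto simp: fui\<close>)
  next
    assume xe: "X = Inc"
    show ?case unfolding xe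
      by (rule RB_dls[OF Run_CS_sub[OF cs[unfolded xe]]]) (use fin t0 iw in \<open>auto simp: fui\<close>)
  qed
next
  case (Suc h)
  then obtain v where v: "t (Suc h) = Some v" by fastforce
  have ih: "RB w B (enc (Run p \<sigma> (X # r) 2 k), i, t, h, out) (enc (Run p \<sigma> r 0 k), i, t, 0, out)"
    using Suc by auto
  from X show ?case
  proof (elim disjE)
    assume xe: "X = EmitC"
    show ?case unfolding xe
      by (rule RB_dls[OF Run_CS_sub[OF cs[unfolded xe]]]) (use v iw ih[unfolded xe] Suc.prems in \<open>auto simp: fui\<close>)
  next
    assume xe: "X = Inc"
    show ?case unfolding xe
      by (rule RB_dls[OF Run_CS_sub[OF cs[unfolded xe]]]) (use v iw ih[unfolded xe] Suc.prems in \<open>auto simp: fui\<close>)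
  qed
qed


lemma op_emit:
  assumes cs: "Run p \<sigma> (Emit a # r) 0 k \<in> CS" and iw: "i \<le> length w + 1"
  shows "RB w B (enc (Run p \<sigma> (Emit a # r) 0 k), i, tape_of bs, 0, out) (enc (Run p \<sigma> r 0 k), i, tape_of bs, 0, out @ [a])"
  by (rule RB_dls[OF cs]) (use iw in \<open>auto simp: fui intro!: RB_refl\<close>)

lemma op_emitc:
  assumes cs: "Run p \<sigma> (EmitC # r) 0 k \<in> CS" and bits: "set bs \<subseteq> {T0, T1}"
    and iw: "i \<le> length w + 1" and B: "length bs + 1 \<le> B"
  shows "RB w B (enc (Run p \<sigma> (EmitC # r) 0 k), i, tape_of bs, 0, out) (enc (Run p \<sigma> r 0 k), i, tape_of bs, 0, out @ bs)"
proof -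
  have a: "RB w B (enc (Run p \<sigma> (EmitC # r) 1 k), i, tape_of bs, 1, out)
     (enc (Run p \<sigma> (EmitC # r) 2 k), i, tape_of bs, length bs, out @ bs)"
    using emitc_right[OF cs bits iw B, of 1 out] by simp
  have b: "RB w B (enc (Run p \<sigma> (EmitC # r) 2 k), i, tape_of bs, length bs, out @ bs)
     (enc (Run p \<sigma> r 0 k), i, tape_of bs, 0, out @ bs)"
    by (rule left_loop[OF cs _ iw]) (use B in \<open>auto simp: tape_of_def\<close>)
  show ?thesis
    by (rule RB_dls[OF cs]) (use iw RB_trans[OF a b] in \<open>auto simp: fui\<close>)
qed

lemma tu1: "(tape_of (pre @ x # r))(Suc (length pre) := Some v) = tape_of (pre @ (if v then T1 else T0) # r)"
  by (auto simp: fun_eq_iff tape_of_def nth_append)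

lemma tu2: "(tape_of pre)(Suc (length pre) := Some True) = tape_of (pre @ [T1])"
  by (auto simp: fun_eq_iff tape_of_def nth_append)

lemma inc_right:
  assumes cs: "Run p \<sigma> (Inc # r) 0 k \<in> CS" and iw: "i \<le> length w + 1"
  shows "set bs \<subseteq> {T0, T1} \<Longrightarrow> length pre + length bs + 1 \<le> B \<Longrightarrow>
    \<exists>h'. h' \<le> length (pre @ incl bs) \<and>
     RB w B (enc (Run p \<sigma> (Inc # r) 1 k), i, tape_of (pre @ bs), Suc (length pre), out)
            (enc (Run p \<sigma> (Inc # r) 2 k), i, tape_of (pre @ incl bs), h', out)"
proof (induction bs arbitrary: pre)
  case Nil
  have "RB w B (enc (Run p \<sigma> (Inc # r) 1 k), i, tape_of pre, Suc (length pre), out)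
            (enc (Run p \<sigma> (Inc # r) 2 k), i, tape_of (pre @ [T1]), length pre, out)"
    by (rule RB_dls[OF Run_CS_sub[OF cs]]) (use iw Nil in \<open>auto simp: tape_of_None tu2 intro!: RB_refl\<close>)
  then show ?case by (intro exI[of _ "length pre"]) simp
next
  case (Cons x bs)
  then have x: "x = T0 \<or> x = T1" and bits: "set bs \<subseteq> {T0, T1}" by auto
  have ts: "tape_of (pre @ x # bs) (Suc (length pre)) = Some (x = T1)" by (simp add: tape_of_def)
  from x show ?case
  proof (elim disjE)
    assume x0: "x = T0"
    have "RB w B (enc (Run p \<sigma> (Inc # r) 1 k), i, tape_of (pre @ x # bs), Suc (length pre), out)
            (enc (Run p \<sigma> (Inc # r) 2 k), i, tape_of (pre @ T1 # bs), length pre, out)"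
      by (rule RB_dls[OF Run_CS_sub[OF cs]]) (use iw Cons.prems ts x0 in \<open>auto simp: tu1 intro!: RB_refl\<close>)
    then show ?case using x0 by (intro exI[of _ "length pre"]) simp
  next
    assume x1: "x = T1"
    obtain h' where h': "h' \<le> length ((pre @ [T0]) @ incl bs)"
      "RB w B (enc (Run p \<sigma> (Inc # r) 1 k), i, tape_of ((pre @ [T0]) @ bs), Suc (length (pre @ [T0])), out)
            (enc (Run p \<sigma> (Inc # r) 2 k), i, tape_of ((pre @ [T0]) @ incl bs), h', out)"
      using Cons.IH[OF bits, of "pre @ [T0]"] Cons.prems by auto
    have "RB w B (enc (Run p \<sigma> (Inc # r) 1 k), i, tape_of (pre @ x # bs), Suc (length pre), out)
            (enc (Run p \<sigma> (Inc # r) 2 k), i, tape_of ((pre @ [T0]) @ incl bs), h', out)"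
      by (rule RB_dls[OF Run_CS_sub[OF cs]]) (use iw Cons.prems ts x1 h'(2) in \<open>auto simp: tu1\<close>)
    then show ?case using x1 h'(1) by (intro exI[of _ h']) simp
  qed
qed

lemma op_inc:
  assumes cs: "Run p \<sigma> (Inc # r) 0 k \<in> CS" and bits: "set bs \<subseteq> {T0, T1}"
    and iw: "i \<le> length w + 1" and B: "length bs + 1 \<le> B" "length (incl bs) \<le> B"
  shows "RB w B (enc (Run p \<sigma> (Inc # r) 0 k), i, tape_of bs, 0, out) (enc (Run p \<sigma> r 0 k), i, tape_of (incl bs), 0, out)"
proof -
  obtain h' where h': "h' \<le> length (incl bs)"
    "RB w B (enc (Run p \<sigma> (Inc # r) 1 k), i, tape_of bs, 1, out)
            (enc (Run p \<sigma> (Inc # r) 2 k), i, tape_of (incl bs), h', out)"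
    using inc_right[OF cs iw bits, of "[]" B out] B by auto
  have b: "RB w B (enc (Run p \<sigma> (Inc # r) 2 k), i, tape_of (incl bs), h', out)
     (enc (Run p \<sigma> r 0 k), i, tape_of (incl bs), 0, out)"
    by (rule left_loop[OF cs _ iw]) (use B h'(1) in \<open>auto simp: tape_of_def\<close>)
  show ?thesis
    by (rule RB_dls[OF cs]) (use iw RB_trans[OF h'(2) b] in \<open>auto simp: fui\<close>)
qed

lemma rst_right:
  assumes cs: "Run p \<sigma> (Rst # r) 0 k \<in> CS"
    and iw: "i \<le> length w + 1" and B: "length bs + 1 \<le> B"
  shows "1 \<le> j \<Longrightarrow> j \<le> length bs + 1 \<Longrightarrow> RB w B (enc (Run p \<sigma> (Rst # r) 1 k), i, tape_of bs, j, out)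
     (enc (Run p \<sigma> (Rst # r) 2 k), i, tape_of bs, length bs, out)"
proof (induction "length bs + 1 - j" arbitrary: j)
  case 0
  then have j: "j = length bs + 1" by simp
  have tn: "tape_of bs j = None" using j by (simp add: tape_of_def)
  show ?case
    by (rule RB_dls[OF Run_CS_sub[OF cs]]) (use B j tn iw in \<open>auto intro!: RB_refl simp: fui\<close>)
next
  case (Suc x)
  then have j: "1 \<le> j" "j \<le> length bs" by auto
  have ts: "tape_of bs j = Some (bs!(j-1) = T1)" using j by (simp add: tape_of_def)
  have ih: "RB w B (enc (Run p \<sigma> (Rst # r) 1 k), i, tape_of bs, Suc j, out)
     (enc (Run p \<sigma> (Rst # r) 2 k), i, tape_of bs, length bs, out)"
    using Suc.hyps(1)[of "Suc j"] Suc.hyps(2) j by simp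
  show ?case
    by (rule RB_dls[OF Run_CS_sub[OF cs]]) (use B j ts iw ih in \<open>auto simp: fui\<close>)
qed

lemma tu3: "Suc j \<le> length bs \<Longrightarrow> (tape_of (take (Suc j) bs))(Suc j := None) = tape_of (take j bs)"
  by (auto simp: fun_eq_iff tape_of_def)

lemma rst_left:
  assumes cs: "Run p \<sigma> (Rst # r) 0 k \<in> CS" and iw: "i \<le> length w + 1"
  shows "j \<le> length bs \<Longrightarrow> j \<le> B \<Longrightarrow>
    RB w B (enc (Run p \<sigma> (Rst # r) 2 k), i, tape_of (take j bs), j, out) (enc (Run p \<sigma> r 0 k), i, tape_of [], 0, out)"
proof (induction j)
  case 0
  show ?case
    by (rule RB_dls[OF Run_CS_sub[OF cs]]) (use iw in \<open>auto simp: fui intro!: RB_refl\<close>)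
next
  case (Suc j)
  have ts: "tape_of (take (Suc j) bs) (Suc j) = Some (bs!j = T1)" using Suc.prems by (simp add: tape_of_def)
  have ih: "RB w B (enc (Run p \<sigma> (Rst # r) 2 k), i, tape_of (take j bs), j, out) (enc (Run p \<sigma> r 0 k), i, tape_of [], 0, out)"
    using Suc by simp
  show ?case
    by (rule RB_dls[OF Run_CS_sub[OF cs]]) (use iw ts ih Suc.prems in \<open>auto simp: tu3\<close>)
qed

lemma op_rst:
  assumes cs: "Run p \<sigma> (Rst # r) 0 k \<in> CS"
    and iw: "i \<le> length w + 1" and B: "length bs + 1 \<le> B"
  shows "RB w B (enc (Run p \<sigma> (Rst # r) 0 k), i, tape_of bs, 0, out) (enc (Run p \<sigma> r 0 k), i, tape_of [], 0, out)"
proof -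
  have a: "RB w B (enc (Run p \<sigma> (Rst # r) 1 k), i, tape_of bs, 1, out)
     (enc (Run p \<sigma> (Rst # r) 2 k), i, tape_of bs, length bs, out)"
    using rst_right[OF cs iw B, of 1 out] by simp
  have b: "RB w B (enc (Run p \<sigma> (Rst # r) 2 k), i, tape_of bs, length bs, out)
     (enc (Run p \<sigma> r 0 k), i, tape_of [], 0, out)"
    using rst_left[OF cs iw, of "length bs" bs B out] B by simp
  show ?thesis
    by (rule RB_dls[OF cs]) (use iw RB_trans[OF a b] in \<open>auto simp: fui\<close>)
qed


fun maxc :: "op list \<Rightarrow> nat \<Rightarrow> nat" where
  "maxc [] c = c"
| "maxc (Inc # r) c = max c (maxc r (Suc c))"
| "maxc (Rst # r) c = max c (maxc r 0)"
| "maxc (Emit t # r) c = max c (maxc r c)"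
| "maxc (EmitC # r) c = max c (maxc r c)"

lemma maxc_ge: "c \<le> maxc ops c"
  by (induction ops c rule: maxc.induct) auto

lemma bin_len: "length (bin n) = (if n = 0 then 0 else Suc (length (bin (n div 2))))"
  by (cases n) auto

lemma len_bin_mono: "a \<le> b \<Longrightarrow> length (bin a) \<le> length (bin b)"
proof (induction b arbitrary: a rule: less_induct)
  case (less b)
  show ?case
  proof (cases "a = 0")
    case True then show ?thesis by simp
  next
    case False
    then have "b \<noteq> 0" "a div 2 \<le> b div 2" "b div 2 < b" using less.prems by (auto intro: div_le_mono)
    then have "length (bin (a div 2)) \<le> length (bin (b div 2))" using less.IH by blast
    then show ?thesis using False \<open>b \<noteq> 0\<close> by (subst (1 2) bin_len) simp
  qed
qed

lemma ops_run:
  "Run p \<sigma> ops 0 k \<in> CS \<Longrightarrow> i \<le> length w + 1 \<Longrightarrow> maxc ops c \<le> N \<Longrightarrow> length (bin N) + 1 \<le> B \<Longrightarrow>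
   RB w B (enc (Run p \<sigma> ops 0 k), i, tape_of (bin c), 0, out)
     (enc (Run p \<sigma> [] 0 k), i, tape_of (bin (fst (exec_ops ops (c, out)))), 0, snd (exec_ops ops (c, out)))"
proof (induction ops arbitrary: c out)
  case Nil then show ?case by (auto intro!: RB_refl)
next
  case (Cons x r)
  have cs': "Run p \<sigma> r 0 k \<in> CS" using Run_CS_tl[OF Cons.prems(1)] .
  have cN: "c \<le> N" using maxc_ge[of c "x # r"] Cons.prems(3) by simp
  then have lc: "length (bin c) + 1 \<le> B" using len_bin_mono[of c N] Cons.prems(4) by simp
  show ?case
  proof (cases x)
    case (Emit a)
    have "maxc r c \<le> N" using Cons.prems(3) Emit by simp
    then show ?thesis using RB_trans[OF op_emit[OF Cons.prems(1)[unfolded Emit] Cons.prems(2)]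
        Cons.IH[OF cs' Cons.prems(2) _ Cons.prems(4)]] Emit by simp
  next
    case EmitC
    have "maxc r c \<le> N" using Cons.prems(3) EmitC by simp
    then show ?thesis using RB_trans[OF op_emitc[OF Cons.prems(1)[unfolded EmitC] bin_bits Cons.prems(2) lc]
        Cons.IH[OF cs' Cons.prems(2) _ Cons.prems(4)]] EmitC by simp
  next
    case Inc
    have m: "maxc r (Suc c) \<le> N" using Cons.prems(3) Inc by simp
    then have "Suc c \<le> N" using maxc_ge[of "Suc c" r] by simp
    then have "length (bin (Suc c)) \<le> length (bin N)" by (rule len_bin_mono)
    then have l2: "length (incl (bin c)) \<le> B" using Cons.prems(4) unfolding bin_Suc_incl by simp
    have a: "RB w B (enc (Run p \<sigma> (Inc # r) 0 k), i, tape_of (bin c), 0, out)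
       (enc (Run p \<sigma> r 0 k), i, tape_of (bin (Suc c)), 0, out)"
      using op_inc[OF Cons.prems(1)[unfolded Inc] bin_bits Cons.prems(2) lc l2] unfolding bin_Suc_incl .
    show ?thesis using RB_trans[OF a Cons.IH[OF cs' Cons.prems(2) m Cons.prems(4)]] Inc by simp
  next
    case Rst
    have m: "maxc r 0 \<le> N" using Cons.prems(3) Rst by simp
    have a: "RB w B (enc (Run p \<sigma> (Rst # r) 0 k), i, tape_of (bin c), 0, out)
       (enc (Run p \<sigma> r 0 k), i, tape_of (bin 0), 0, out)"
      using op_rst[OF Cons.prems(1)[unfolded Rst] Cons.prems(2) lc] by simp
    show ?thesis using RB_trans[OF a Cons.IH[OF cs' Cons.prems(2) m Cons.prems(4), of out]] Rst by simp
  qed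
qed


definition gp :: "nat \<Rightarrow> nat" where "gp p = (if p = 2 \<or> p = 5 then 0 else 1)"

lemma tops_bound: "maxc (tops p \<sigma> t) c \<le> c + gp p \<and> fst (exec_ops (tops p \<sigma> t) (c, out)) \<le> c + gp p"
  unfolding tops_def gp_def by (auto split: prod.splits)

lemma tok_step:
  assumes p: "p < 6" "\<sigma> \<in> SG" and i: "1 \<le> i" "i \<le> length w"
    and m: "maxc (tops p \<sigma> (w!(i-1))) c \<le> N" and B: "length (bin N) + 1 \<le> B"
  shows "RB w B (enc (Rd p \<sigma>), i, tape_of (bin c), 0, out)
     (enc (Rd p (dlt p \<sigma> (w!(i-1)))), Suc i, tape_of (bin (fst (exec_ops (tops p \<sigma> (w!(i-1))) (c, out)))), 0,
        snd (exec_ops (tops p \<sigma> (w!(i-1))) (c, out)))"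
proof -
  let ?t = "w!(i-1)"
  let ?s = "dlt p \<sigma> ?t"
  let ?r = "exec_ops (tops p \<sigma> ?t) (c, out)"
  have rd: "read_in w i = Some ?t" using i by (simp add: read_in_def)
  have cs1: "Run p ?s (tops p \<sigma> ?t) 0 CAdv \<in> CS" using p by (simp add: dlt_SG tops_OPS)
  have iw: "i \<le> length w + 1" using i by simp
  have r1: "RB w B (enc (Run p ?s (tops p \<sigma> ?t) 0 CAdv), i, tape_of (bin c), 0, out)
     (enc (Run p ?s [] 0 CAdv), i, tape_of (bin (fst ?r)), 0, snd ?r)"
    by (rule ops_run[OF cs1 iw m B])
  have r2: "RB w B (enc (Run p ?s [] 0 CAdv), i, tape_of (bin (fst ?r)), 0, snd ?r)
     (enc (Rd p ?s), Suc i, tape_of (bin (fst ?r)), 0, snd ?r)"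
    by (rule RB_dls) (use p i in \<open>auto simp: dlt_SG fui intro!: RB_refl\<close>)
  show ?thesis
    by (rule RB_dls[of "Rd p \<sigma>"]) (use p rd iw RB_trans[OF r1 r2] in \<open>auto simp: fui\<close>)
qed

lemma pass_loop:
  assumes p: "p < 6" and B: "length (bin N) + 1 \<le> B"
  shows "\<sigma> \<in> SG \<Longrightarrow> 1 \<le> i \<Longrightarrow> i \<le> length w + 1 \<Longrightarrow> c + gp p * (length w + 1 - i) \<le> N \<Longrightarrow>
    RB w B (enc (Rd p \<sigma>), i, tape_of (bin c), 0, out)
      (case fold (absstep p) (drop (i - 1) w) (\<sigma>, c, out) of (\<sigma>', c', out') \<Rightarrow>
         (enc (Rd p \<sigma>'), length w + 1, tape_of (bin c'), 0, out'))"
proof (induction "length w + 1 - i" arbitrary: i \<sigma> c out)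
  case 0
  then have "i = length w + 1" by simp
  then show ?case by (auto intro!: RB_refl)
next
  case (Suc x)
  then have i: "1 \<le> i" "i \<le> length w" by auto
  let ?t = "w!(i-1)"
  let ?r = "exec_ops (tops p \<sigma> ?t) (c, out)"
  have d: "drop (i - 1) w = ?t # drop i w"
  proof -
    have "i - 1 < length w" using i by simp
    then have "drop (i-1) w = w!(i-1) # drop (Suc (i-1)) w" by (rule Cons_nth_drop_Suc[symmetric])
    then show ?thesis using i by simp
  qed
  have tb: "maxc (tops p \<sigma> ?t) c \<le> c + gp p" "fst ?r \<le> c + gp p" using tops_bound by blast+
  have "1 \<le> length w + 1 - i" using i by simp
  then have "gp p * 1 \<le> gp p * (length w + 1 - i)" by (rule mult_le_mono2)
  then have "gp p \<le> gp p * (length w + 1 - i)" by simp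
  then have m: "maxc (tops p \<sigma> ?t) c \<le> N" using tb(1) Suc.prems(4) by linarith
  have a: "RB w B (enc (Rd p \<sigma>), i, tape_of (bin c), 0, out)
     (enc (Rd p (dlt p \<sigma> ?t)), Suc i, tape_of (bin (fst ?r)), 0, snd ?r)"
    by (rule tok_step[OF p Suc.prems(1) i m B])
  have e: "gp p * (length w + 1 - i) = gp p + gp p * (length w + 1 - Suc i)" using i
    by (simp add: Suc_diff_le right_diff_distrib' algebra_simps)
  have "fst ?r + gp p * (length w + 1 - Suc i) \<le> N" using tb(2) Suc.prems(4) e by linarith
  then have b: "RB w B (enc (Rd p (dlt p \<sigma> ?t)), Suc i, tape_of (bin (fst ?r)), 0, snd ?r)
      (case fold (absstep p) (drop (Suc i - 1) w) (dlt p \<sigma> ?t, fst ?r, snd ?r) of (\<sigma>', c', out') \<Rightarrow>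
         (enc (Rd p \<sigma>'), length w + 1, tape_of (bin c'), 0, out'))"
    using Suc.hyps(1)[of "Suc i" "dlt p \<sigma> ?t" "fst ?r" "snd ?r"] Suc.hyps(2) i dlt_SG[OF Suc.prems(1)] by simp
  show ?case using RB_trans[OF a b] d by (simp add: absstep_def)
qed

lemma rewind:
  assumes p: "p < 6"
  shows "j \<le> length w \<Longrightarrow> RB w B (enc (Rwd p), j, t, 0, out) (enc (Run p sg0 (startops p) 0 CAdv), 0, t, 0, out)"
proof (induction j)
  case 0
  show ?case by (rule RB_dls) (use p in \<open>auto simp: fui read_in_def intro!: RB_refl\<close>)
next
  case (Suc j)
  have "read_in w (Suc j) = Some (w!j)" using Suc.prems by (simp add: read_in_def)
  then show ?case by (intro RB_dls[of "Rwd p"]) (use p Suc in \<open>auto simp: fui\<close>)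
qed


lemma p6_cases: "p < 6 \<Longrightarrow> p = 0 \<or> p = Suc 0 \<or> p = 2 \<or> p = 3 \<or> p = 4 \<or> p = (5::nat)" by arith

lemma start_cnt: "p < 6 \<Longrightarrow> fst (exec_ops (startops p) (c, out)) = (if p = 2 \<or> p = 5 then c else 1)"
  by (drule p6_cases) (auto simp: startops_def)

lemma maxc_start: "p < 6 \<Longrightarrow> maxc (startops p) c \<le> max c 1"
  by (drule p6_cases) (auto simp: startops_def)

lemma end_cnt: "fst (exec_ops (endops p \<sigma>) (c, out)) = c" "maxc (endops p \<sigma>) c = c"
  by (auto simp: endops_def)

lemma fold_cnt: "fst (snd (fold (absstep p) xs (\<sigma>, c, out))) \<le> c + gp p * length xs"
proof (induction xs arbitrary: \<sigma> c out)
  case Nil then show ?case by simp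
next
  case (Cons t xs)
  obtain c' out' where e: "exec_ops (tops p \<sigma> t) (c, out) = (c', out')" by fastforce
  have "c' \<le> c + gp p" using tops_bound[of p \<sigma> t c out] e by simp
  moreover have "fst (snd (fold (absstep p) xs (dlt p \<sigma> t, c', out'))) \<le> c' + gp p * length xs"
    using Cons.IH .
  moreover have eq: "fold (absstep p) (t # xs) (\<sigma>, c, out) = fold (absstep p) xs (dlt p \<sigma> t, c', out')"
    using e by (simp add: absstep_def)
  ultimately show ?case unfolding eq by simp
qed

lemma fold_SG: "\<sigma> \<in> SG \<Longrightarrow> fst (fold (absstep p) xs (\<sigma>, co)) \<in> SG"
proof (induction xs arbitrary: \<sigma> co)
  case Nil then show ?case by simp
next
  case (Cons t xs)
  then show ?case using dlt_SG[OF Cons.prems] by (simp add: absstep_def)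
qed

definition nextconf :: "nat \<Rightarrow> tok list \<Rightarrow> nat \<times> tok list \<Rightarrow> tmconf" where
  "nextconf p w co = (if p < 5 then (enc (Run (Suc p) sg0 (startops (Suc p)) 0 CAdv), 0, tape_of (bin (fst co)), 0, snd co)
     else (enc Halt, length w + 1, tape_of (bin (fst co)), 0, snd co))"

lemma pre_pass:
  assumes p: "p < 6" and N: "N = length w + 1" and B: "B = length (bin N) + 1" and c: "c \<le> N"
  shows "RB w B (enc (Run p sg0 (startops p) 0 CAdv), 0, tape_of (bin c), 0, out) (nextconf p w (abspass w p (c, out)))
     \<and> fst (abspass w p (c, out)) \<le> N"
proof -
  obtain c1 o1 where e1: "exec_ops (startops p) (c, out) = (c1, o1)" by fastforce
  obtain \<sigma>' c2 o2 where f: "fold (absstep p) w (sg0, c1, o1) = (\<sigma>', c2, o2)" by (metis prod.exhaust)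
  obtain c3 o3 where e3: "exec_ops (endops p \<sigma>') (c2, o2) = (c3, o3)" by fastforce
  have ap: "abspass w p (c, out) = (c3, o3)" unfolding abspass_def e1 f using e3 by simp
  have BN: "length (bin N) + 1 \<le> B" using B by simp
  have c1: "c1 = (if p = 2 \<or> p = 5 then c else 1)" using start_cnt[OF p, of c out] e1 by simp
  have m1: "maxc (startops p) c \<le> N" using maxc_start[OF p, of c] c N by simp
  have s1: "RB w B (enc (Run p sg0 (startops p) 0 CAdv), 0, tape_of (bin c), 0, out)
     (enc (Run p sg0 [] 0 CAdv), 0, tape_of (bin c1), 0, o1)"
    using ops_run[of p sg0 "startops p" CAdv 0 w c N B out] p startops_OPS[OF p] m1 BN e1 by simp
  have s2: "RB w B (enc (Run p sg0 [] 0 CAdv), 0, tape_of (bin c1), 0, o1)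
     (enc (Rd p sg0), 1, tape_of (bin c1), 0, o1)"
    by (rule RB_dls) (use p in \<open>auto simp: fui intro!: RB_refl\<close>)
  have g: "c1 + gp p * (length w + 1 - 1) \<le> N" using c1 c N by (auto simp: gp_def)
  have s3: "RB w B (enc (Rd p sg0), 1, tape_of (bin c1), 0, o1)
     (enc (Rd p \<sigma>'), length w + 1, tape_of (bin c2), 0, o2)"
    using pass_loop[OF p BN, where \<sigma> = sg0 and i = 1 and c = c1 and out = o1 and w = w] g f by simp
  have sSG: "\<sigma>' \<in> SG" using fold_SG[of sg0 p w "(c1, o1)"] f by simp
  have c2: "c2 \<le> N" using fold_cnt[of p w sg0 c1 o1] f g by simp
  have rdn: "read_in w (length w + 1) = None" by (simp add: read_in_def)
  let ?k = "if p = 5 then CHlt else CRew"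
  have s4: "RB w B (enc (Rd p \<sigma>'), length w + 1, tape_of (bin c2), 0, o2)
     (enc (Run p \<sigma>' (endops p \<sigma>') 0 ?k), length w + 1, tape_of (bin c2), 0, o2)"
    by (rule RB_dls[of "Rd p \<sigma>'"]) (use p sSG rdn in \<open>auto simp: fui intro!: RB_refl\<close>)
  have c3: "c3 = c2" using end_cnt(1)[of p \<sigma>' c2 o2] e3 by simp
  have s5: "RB w B (enc (Run p \<sigma>' (endops p \<sigma>') 0 ?k), length w + 1, tape_of (bin c2), 0, o2)
     (enc (Run p \<sigma>' [] 0 ?k), length w + 1, tape_of (bin c2), 0, o3)"
  proof -
    have "RB w B (enc (Run p \<sigma>' (endops p \<sigma>') 0 ?k), length w + 1, tape_of (bin c2), 0, o2)
     (enc (Run p \<sigma>' [] 0 ?k), length w + 1, tape_of (bin (fst (exec_ops (endops p \<sigma>') (c2, o2)))), 0,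
        snd (exec_ops (endops p \<sigma>') (c2, o2)))"
      by (rule ops_run) (use p sSG endops_OPS[OF p sSG] end_cnt(2)[of p \<sigma>' c2] c2 BN in simp_all)
    then show ?thesis unfolding e3 c3 by simp
  qed
  have s6: "RB w B (enc (Run p \<sigma>' [] 0 ?k), length w + 1, tape_of (bin c2), 0, o3) (nextconf p w (c3, o3))"
  proof (cases "p < 5")
    case True
    have r: "RB w B (enc (Rwd (Suc p)), length w, tape_of (bin c2), 0, o3)
      (enc (Run (Suc p) sg0 (startops (Suc p)) 0 CAdv), 0, tape_of (bin c2), 0, o3)"
      by (rule rewind) (use True in simp_all)
    show ?thesis unfolding nextconf_def c3
      by (rule RB_dls) (use True p sSG r in \<open>auto simp: fui\<close>)
  next
    case False
    then have p5: "p = 5" using p by simp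
    show ?thesis unfolding nextconf_def c3
      by (rule RB_dls) (use p5 sSG in \<open>auto simp: fui intro!: RB_refl\<close>)
  qed
  show ?thesis using RB_trans[OF s1 RB_trans[OF s2 RB_trans[OF s3 RB_trans[OF s4 RB_trans[OF s5 s6]]]]] ap c2 c3
    by simp
qed


lemma tape_of_Nil: "tape_of [] = (\<lambda>_. None)" by (simp add: fun_eq_iff tape_of_def)

lemma run_upto:
  assumes N: "N = length w + 1" and B: "B = length (bin N) + 1"
  shows "p \<le> 5 \<Longrightarrow> RB w B (enc (Run 0 sg0 (startops 0) 0 CAdv), 0, (\<lambda>_. None), 0, [])
    (enc (Run p sg0 (startops p) 0 CAdv), 0, tape_of (bin (fst (fold (abspass w) [0..<p] (0, [])))), 0,
       snd (fold (abspass w) [0..<p] (0, []))) \<and> fst (fold (abspass w) [0..<p] (0, [])) \<le> N"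
proof (induction p)
  case 0 then show ?case by (auto simp: tape_of_Nil intro!: RB_refl)
next
  case (Suc p)
  let ?s = "fold (abspass w) [0..<p] (0, [])"
  have ih: "RB w B (enc (Run 0 sg0 (startops 0) 0 CAdv), 0, (\<lambda>_. None), 0, [])
    (enc (Run p sg0 (startops p) 0 CAdv), 0, tape_of (bin (fst ?s)), 0, snd ?s)" "fst ?s \<le> N"
    using Suc by auto
  have pp: "RB w B (enc (Run p sg0 (startops p) 0 CAdv), 0, tape_of (bin (fst ?s)), 0, snd ?s)
      (nextconf p w (abspass w p (fst ?s, snd ?s))) \<and> fst (abspass w p (fst ?s, snd ?s)) \<le> N"
    using pre_pass[where p = p and out = "snd ?s", OF _ N B ih(2)] Suc.prems by simp
  have e: "fold (abspass w) [0..<Suc p] (0, []) = abspass w p ?s" by simp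
  show ?case using RB_trans[OF ih(1)] pp Suc.prems unfolding e nextconf_def by simp
qed

lemma run_all:
  assumes N: "N = length w + 1" and B: "B = length (bin N) + 1"
  shows "\<exists>t. RB w B (enc (Run 0 sg0 (startops 0) 0 CAdv), 0, (\<lambda>_. None), 0, []) (enc Halt, length w + 1, t, 0, fout w)"
proof -
  let ?s = "fold (abspass w) [0..<5] (0, [])"
  have a: "RB w B (enc (Run 0 sg0 (startops 0) 0 CAdv), 0, (\<lambda>_. None), 0, [])
    (enc (Run 5 sg0 (startops 5) 0 CAdv), 0, tape_of (bin (fst ?s)), 0, snd ?s)" "fst ?s \<le> N"
    using run_upto[OF N B, of 5] by auto
  have pp: "RB w B (enc (Run 5 sg0 (startops 5) 0 CAdv), 0, tape_of (bin (fst ?s)), 0, snd ?s)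
      (nextconf 5 w (abspass w 5 (fst ?s, snd ?s)))"
    using pre_pass[where p = 5 and out = "snd ?s", OF _ N B a(2)] by simp
  have u: "[0..<6] = [0..<5] @ [5::nat]" by (simp add: upt_rec)
  have e: "fout w = snd (abspass w 5 ?s)" unfolding fout_def u by simp
  show ?thesis using RB_trans[OF a(1) pp] unfolding nextconf_def e by auto
qed

lemma halt_iter: "(tm_step Mach w ^^ m) (enc Halt, x) = (enc Halt, x)"
  by (induction m) (simp_all add: step_halt)

lemma pow_bin_len: "1 \<le> n \<Longrightarrow> 2 ^ (length (bin n) - 1) \<le> n"
proof (induction n rule: less_induct)
  case (less n)
  show ?case
  proof (cases "n div 2 = 0")
    case True
    then have "n = 1" using less.prems by simp
    then show ?thesis by simp
  next
    case False
    then have "2 ^ (length (bin (n div 2)) - 1) \<le> n div 2" using less.IH[of "n div 2"] less.prems by simp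
    moreover have "length (bin (n div 2)) \<ge> 1" using False by (subst bin_len) simp
    ultimately have "2 ^ (length (bin (n div 2))) \<le> 2 * (n div 2)"
      by (metis Suc_diff_le diff_Suc_1 mult_le_mono2 power_Suc)
    also have "\<dots> \<le> n" by simp
    finally show ?thesis using less.prems by (subst bin_len) simp
  qed
qed

lemma Mach_w: "(\<exists>n. cstate (tm_run Mach w n) = qf Mach \<and> coutput (tm_run Mach w n) = fout w) \<and>
     (\<forall>n. real (cwhead (tm_run Mach w n)) \<le> 3 * log 2 (real (length w) + 2))"
proof -
  define N where "N = length w + 1"
  define B where "B = length (bin N) + 1"
  let ?f = "tm_step Mach w"
  let ?i = "(q0 Mach, 0::nat, (\<lambda>_. None) :: nat \<Rightarrow> bool option, 0::nat, [] :: tok list)"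
  have q0: "q0 Mach = enc (Run 0 sg0 (startops 0) 0 CAdv)" by (simp add: Mach_def)
  obtain t where "RB w B ?i (enc Halt, length w + 1, t, 0, fout w)"
    using run_all[OF N_def B_def] q0 by auto
  then obtain n0 where n0: "(?f ^^ n0) ?i = (enc Halt, length w + 1, t, 0, fout w)"
    "\<forall>m\<le>n0. cwhead ((?f ^^ m) ?i) \<le> B" unfolding RB_def by blast
  have P1: "\<exists>n. cstate (tm_run Mach w n) = qf Mach \<and> coutput (tm_run Mach w n) = fout w"
    using n0(1) by (intro exI[of _ n0]) (simp add: tm_run_def cstate_def coutput_def Mach_def)
  have hb: "cwhead (tm_run Mach w n) \<le> B" for n
  proof (cases "n \<le> n0")
    case True then show ?thesis using n0(2) by (simp add: tm_run_def)
  next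
    case False
    then have "n = (n - n0) + n0" by simp
    then have "(?f ^^ n) ?i = (?f ^^ (n - n0)) ((?f ^^ n0) ?i)" by (metis funpow_add o_apply)
    then show ?thesis using n0(1) halt_iter by (simp add: tm_run_def)
  qed
  have L1: "1 \<le> length (bin N)" unfolding N_def by (subst bin_len) simp
  have "2 ^ (length (bin N) - 1) \<le> N" using pow_bin_len[of N] N_def by simp
  then have "2 ^ (length (bin N) - 1) \<le> length w + 2" unfolding N_def by simp
  then have l1: "real (length (bin N) - 1) \<le> log 2 (real (length w + 2))" by (rule le_log2_of_power)
  have "(2::nat) ^ 1 \<le> length w + 2" by simp
  then have l2: "real 1 \<le> log 2 (real (length w + 2))" by (rule le_log2_of_power)
  have rr: "real (length w + 2) = real (length w) + 2" by simp
  have l1': "real (length (bin N) - 1) \<le> log 2 (real (length w) + 2)" using l1 unfolding rr .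
  have l2': "1 \<le> log 2 (real (length w) + 2)" using l2 unfolding rr by simp
  have "real B = real (length (bin N) - 1) + 2" unfolding B_def using L1 by simp
  also have "\<dots> \<le> 3 * log 2 (real (length w) + 2)" using l1' l2' by linarith
  finally have "real B \<le> 3 * log 2 (real (length w) + 2)" .
  then have "real (cwhead (tm_run Mach w n)) \<le> 3 * log 2 (real (length w) + 2)" for n
    using hb[of n] by (meson of_nat_le_iff order_trans)
  then show ?thesis using P1 by blast
qed

theorem logspace_Mach: "logspace_computes Mach fout"
  unfolding logspace_computes_def using wf_Mach Mach_w by blast


theorem lemma5p2:
  shows "logspace_reduces_sc_to mincover_rec \<and> logspace_reduces_sc_to mincover_lossy"
  by (rule reduction[OF logspace_Mach])

end
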